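(* Consider a linear $L$-layer MPNN trained by gradient flow on a dataset $\{(G_i,\mathbf{X}_i,y_i)\}_{i=1}^k$ that is separable, i.e. there is $\bar{\mathbf{u}}\in\mathbb{R}^d$ with $y_i\,\bar{\mathbf{u}}^\top\mathbf{X}_i\mathbf{A}'(G_i)^L\mathbf{1}_{n_i}>0$ for all $i$. Suppose the loss $\ell:\mathbb{R}\to\mathbb{R}_{>0}$ has a continuous derivative with $\ell'(x)<0$ for all $x$, $\lim_{x\to-\infty}\ell(x)=\infty$ and $\lim_{x\to\infty}\ell(x)=0$, and that the initialisation satisfies $\mathcal{R}(\mathbf{W}(0))<\mathcal{R}(0)=\ell(0)$. For each $j$, let $\mathbf{u}_j(t)\in\mathbb{R}^{d_j}$ and $\mathbf{v}_j(t)\in\mathbb{R}^{d_{j-1}}$ be left and right singular vectors of $\mathbf{W}^{(j)}(t)$ for its largest singular value. Then: (i) for every $j=1,\dots,L$, $\lim_{t\to\infty}\big\|\mathbf{W}^{(j)}(t)/\|\mathbf{W}^{(j)}(t)\|_F-\mathbf{u}_j(t)\mathbf{v}_j(t)^\top\big\|_F=0$; (ii) $\lim_{t\to\infty}\Big|\Big\langle\dfrac{(\mathbf{W}^{(L)}(t)\cdots\mathbf{W}^{(1)}(t))^\top}{\prod_{j=1}^L\|\mathbf{W}^{(j)}(t)\|_F},\mathbf{v}_1(t)\Big\rangle\Big|=1$.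
   Context: For a graph $G$ on $n$ vertices, $\mathbf{A}(G)\in\{0,1\}^{n\times n}$ is its adjacency matrix, $\mathbf{A}'(G)=\mathbf{A}(G)+\mathbf{I}_n$, and $\mathbf{1}_n$ the all-ones vector. Training data: graphs $G_i$ on $n_i$ vertices, node feature matrices $\mathbf{X}_i\in\mathbb{R}^{d\times n_i}$ (columns = vertex features), labels $y_i\in\{-1,+1\}$; $\mathbf{Z}_i=y_i\mathbf{X}_i$. The linear MPNN has weights $\mathbf{W}=(\mathbf{W}^{(L)},\dots,\mathbf{W}^{(1)})$, $\mathbf{W}^{(j)}\in\mathbb{R}^{d_j\times d_{j-1}}$, $d_0=d$, $d_L=1$, and predicts $\hat y=\mathbf{W}^{(L)}\cdots\mathbf{W}^{(1)}\mathbf{X}\mathbf{A}'(G)^L\mathbf{1}_n$. The empirical risk is $\mathcal{R}(\mathbf{W})=\frac1k\sum_{i=1}^k\ell\big(\mathbf{W}^{(L)}\cdots\mathbf{W}^{(1)}\mathbf{Z}_i\mathbf{A}'(G_i)^L\mathbf{1}_{n_i}\big)$, and $\mathcal{R}(0)$ denotes its value at all-zero weights. Gradient flow: $\mathbf{W}(t)$, $t\ge0$, with $\frac{d\mathbf{W}(t)}{dt}=-\nabla\mathcal{R}(\mathbf{W}(t))$ from the initial state $\mathbf{W}(0)$. $\|\cdot\|_F$ is the Frobenius norm. *)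

theory Defs
  imports "HOL-Analysis.Analysis" "Jordan_Normal_Form.Matrix"
begin

definition simple_graph :: "nat \<Rightarrow> (nat \<Rightarrow> nat \<Rightarrow> bool) \<Rightarrow> bool" where
  "simple_graph n E \<longleftrightarrow> (\<forall>a b. E a b \<longrightarrow> a < n \<and> b < n \<and> a \<noteq> b \<and> E b a)"

definition adj_mat :: "nat \<Rightarrow> (nat \<Rightarrow> nat \<Rightarrow> bool) \<Rightarrow> real mat" where
  "adj_mat n E = mat n n (\<lambda>(a,b). if E a b then 1 else 0)"

definition adj_mat' :: "nat \<Rightarrow> (nat \<Rightarrow> nat \<Rightarrow> bool) \<Rightarrow> real mat" where
  "adj_mat' n E = adj_mat n E + 1\<^sub>m n"

definition ones_vec :: "nat \<Rightarrow> real vec" where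
  "ones_vec n = vec n (\<lambda>_. 1)"

definition agg_feat :: "nat \<Rightarrow> nat \<Rightarrow> (nat \<Rightarrow> nat \<Rightarrow> bool) \<Rightarrow> real mat \<Rightarrow> real vec" where
  "agg_feat L n E X = (X * (adj_mat' n E ^\<^sub>m L)) *\<^sub>v ones_vec n"

fun prod_layers :: "(nat \<Rightarrow> nat) \<Rightarrow> (nat \<Rightarrow> real mat) \<Rightarrow> nat \<Rightarrow> real mat" where
  "prod_layers d Ws 0 = 1\<^sub>m (d 0)"
| "prod_layers d Ws (Suc j) = Ws (Suc j) * prod_layers d Ws j"

definition weights_dims :: "nat \<Rightarrow> (nat \<Rightarrow> nat) \<Rightarrow> (nat \<Rightarrow> real mat) \<Rightarrow> bool" where
  "weights_dims L d Ws \<longleftrightarrow> (\<forall>j\<in>{1..L}. Ws j \<in> carrier_mat (d j) (d (j - 1)))"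

definition zero_weights :: "(nat \<Rightarrow> nat) \<Rightarrow> nat \<Rightarrow> real mat" where
  "zero_weights d j = 0\<^sub>m (d j) (d (j - 1))"

text \<open>Empirical risk R(W) = 1/k sum_i loss(W^(L)...W^(1) Z_i A'(G_i)^L 1), with
  Z_i = y_i X_i.  The scalar output is the unique entry of the 1-dimensional vector.\<close>
definition risk ::
  "(real \<Rightarrow> real) \<Rightarrow> nat \<Rightarrow> (nat \<Rightarrow> nat) \<Rightarrow> nat \<Rightarrow> (nat \<Rightarrow> nat)
   \<Rightarrow> (nat \<Rightarrow> nat \<Rightarrow> nat \<Rightarrow> bool) \<Rightarrow> (nat \<Rightarrow> real mat) \<Rightarrow> (nat \<Rightarrow> real)
   \<Rightarrow> (nat \<Rightarrow> real mat) \<Rightarrow> real" where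
  "risk loss L d k n G X y Ws =
     (1 / real k) * (\<Sum>i<k. loss ((prod_layers d Ws L *\<^sub>v agg_feat L (n i) (G i) (y i \<cdot>\<^sub>m X i)) $ 0))"

definition upd_entry :: "(nat \<Rightarrow> real mat) \<Rightarrow> nat \<Rightarrow> nat \<Rightarrow> nat \<Rightarrow> real \<Rightarrow> nat \<Rightarrow> real mat" where
  "upd_entry Ws j a b x =
     Ws(j := mat (dim_row (Ws j)) (dim_col (Ws j)) (\<lambda>(p,q). if (p,q) = (a,b) then x else Ws j $$ (p,q)))"

definition grad_entry :: "((nat \<Rightarrow> real mat) \<Rightarrow> real) \<Rightarrow> (nat \<Rightarrow> real mat) \<Rightarrow> nat \<Rightarrow> nat \<Rightarrow> nat \<Rightarrow> real" where
  "grad_entry F Ws j a b = deriv (\<lambda>x. F (upd_entry Ws j a b x)) (Ws j $$ (a,b))"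

definition gradient_flow ::
  "nat \<Rightarrow> (nat \<Rightarrow> nat) \<Rightarrow> ((nat \<Rightarrow> real mat) \<Rightarrow> real) \<Rightarrow> (real \<Rightarrow> nat \<Rightarrow> real mat) \<Rightarrow> bool" where
  "gradient_flow L d F W \<longleftrightarrow>
     (\<forall>t\<ge>0. weights_dims L d (W t)) \<and>
     (\<forall>t\<ge>0. \<forall>j\<in>{1..L}. \<forall>a<d j. \<forall>b<d (j - 1).
        ((\<lambda>s. W s j $$ (a,b)) has_real_derivative (- grad_entry F (W t) j a b)) (at t within {0..}))"

definition vnorm :: "real vec \<Rightarrow> real" where
  "vnorm v = sqrt (v \<bullet> v)"

definition frob_norm :: "real mat \<Rightarrow> real" where
  "frob_norm M = sqrt (\<Sum>a<dim_row M. \<Sum>b<dim_col M. (M $$ (a,b))^2)"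

definition outer_prod :: "real vec \<Rightarrow> real vec \<Rightarrow> real mat" where
  "outer_prod u v = mat (dim_vec u) (dim_vec v) (\<lambda>(a,b). u $ a * v $ b)"

definition singular_triple :: "real mat \<Rightarrow> real \<Rightarrow> real vec \<Rightarrow> real vec \<Rightarrow> bool" where
  "singular_triple M \<sigma> u v \<longleftrightarrow>
     \<sigma> \<ge> 0 \<and> u \<in> carrier_vec (dim_row M) \<and> v \<in> carrier_vec (dim_col M) \<and>
     vnorm u = 1 \<and> vnorm v = 1 \<and>
     M *\<^sub>v v = \<sigma> \<cdot>\<^sub>v u \<and> transpose_mat M *\<^sub>v u = \<sigma> \<cdot>\<^sub>v v"

definition top_singular_vectors :: "real mat \<Rightarrow> real vec \<Rightarrow> real vec \<Rightarrow> bool" where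
  "top_singular_vectors M u v \<longleftrightarrow>
     (\<exists>\<sigma>. singular_triple M \<sigma> u v \<and> (\<forall>\<tau> u' v'. singular_triple M \<tau> u' v' \<longrightarrow> \<tau> \<le> \<sigma>))"

end

theory Submission
  imports Defs
begin


definition nsq :: "nat \<Rightarrow> (nat \<Rightarrow> real) \<Rightarrow> real" where
  "nsq c x = (\<Sum>b<c. (x b)^2)"

lemma nsq_nonneg: "nsq c x \<ge> 0"
  unfolding nsq_def by (simp add: sum_nonneg)

lemma CS_sum: "(\<Sum>b<c. x b * y b)^2 \<le> nsq c x * nsq c y"
  unfolding nsq_def by (rule Cauchy_Schwarz_ineq_sum)

lemma CS_abs: "\<bar>\<Sum>b<c. x b * y b\<bar> \<le> sqrt (nsq c x) * sqrt (nsq c y)"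
proof -
  have "\<bar>\<Sum>b<c. x b * y b\<bar> = sqrt ((\<Sum>b<c. x b * y b)^2)" by simp
  also have "\<dots> \<le> sqrt (nsq c x * nsq c y)" using CS_sum real_sqrt_le_iff by blast
  finally show ?thesis by (simp add: real_sqrt_mult)
qed

lemma app_bound:
  "nsq r (\<lambda>a. \<Sum>b<c. w a b * x b) \<le> (\<Sum>a<r. \<Sum>b<c. (w a b)^2) * nsq c x"
proof -
  have "nsq r (\<lambda>a. \<Sum>b<c. w a b * x b) = (\<Sum>a<r. (\<Sum>b<c. w a b * x b)^2)"
    by (simp add: nsq_def)
  also have "\<dots> \<le> (\<Sum>a<r. nsq c (w a) * nsq c x)"
    by (rule sum_mono) (rule CS_sum)
  also have "\<dots> = (\<Sum>a<r. \<Sum>b<c. (w a b)^2) * nsq c x"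
    by (simp add: nsq_def sum_distrib_right)
  finally show ?thesis .
qed

lemma appT_bound:
  "nsq c (\<lambda>b. \<Sum>a<r. w a b * y a) \<le> (\<Sum>a<r. \<Sum>b<c. (w a b)^2) * nsq r y"
proof -
  have "nsq c (\<lambda>b. \<Sum>a<r. w a b * y a) \<le> (\<Sum>b<c. \<Sum>a<r. (w a b)^2) * nsq r y"
    using app_bound[where r=c and c=r and w="\<lambda>b a. w a b" and x=y] by simp
  also have "(\<Sum>b<c. \<Sum>a<r. (w a b)^2) = (\<Sum>a<r. \<Sum>b<c. (w a b)^2)"
    by (rule sum.swap)
  finally show ?thesis .
qed

lemma quad_lin_zero:
  fixes a b :: real
  assumes "\<And>e. a * e + b * e^2 \<le> 0"
  shows "a = 0"
proof (rule ccontr)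
  assume a: "a \<noteq> 0"
  define s where "s = 1 / (\<bar>b\<bar> + 1)"
  have s: "s > 0" "\<bar>b\<bar> * s < 1" unfolding s_def by (auto simp: field_simps)
  have "a * (a * s) + b * (a * s)^2 \<le> 0" by (rule assms)
  hence "a^2 * s * (1 + b * s) \<le> 0" by (simp add: algebra_simps power2_eq_square)
  moreover have "1 + b * s > 0" using s by (smt (verit) abs_ge_minus_self mult_minus_left mult_right_mono)
  moreover have "a^2 * s > 0" using a s by simp
  ultimately show False by (metis mult_pos_pos not_le)
qed


lemma compact_box: "compact (Pi UNIV (\<lambda>i::nat. if i < c then {-1..1::real} else {0}))"
proof -
  have "compactin (product_topology (\<lambda>i. euclidean) UNIV) (PiE UNIV (\<lambda>i::nat. if i < c then {-1..1::real} else {0}))"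
    by (subst compactin_PiE) auto
  thus ?thesis by (simp add: euclidean_product_topology PiE_def extensional_UNIV)
qed

lemma cont_nsq: "continuous_on S (\<lambda>x. nsq c x)"
  unfolding nsq_def
  by (intro continuous_intros continuous_on_subset[OF continuous_on_product_coordinates]) auto

lemma cont_phi: "continuous_on S (\<lambda>x. nsq r (\<lambda>a. \<Sum>b<c. w a b * x b))"
  unfolding nsq_def
  by (intro continuous_intros continuous_on_subset[OF continuous_on_product_coordinates]) auto

lemma exists_max:
  fixes w :: "nat \<Rightarrow> nat \<Rightarrow> real"
  assumes "c > 0"
  shows "\<exists>x. nsq c x = 1 \<and> (\<forall>z. nsq r (\<lambda>a. \<Sum>b<c. w a b * z b) \<le> nsq r (\<lambda>a. \<Sum>b<c. w a b * x b) * nsq c z)"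
proof -
  define K where "K = Pi UNIV (\<lambda>i::nat. if i < c then {-1..1::real} else {0}) \<inter> {x. nsq c x = 1}"
  define phi where "phi = (\<lambda>x. nsq r (\<lambda>a. \<Sum>b<c. w a b * x b))"
  have "closed {x::nat\<Rightarrow>real. nsq c x = 1}"
    by (rule closed_Collect_eq) (auto intro: cont_nsq)
  hence cK: "compact K" unfolding K_def by (intro compact_Int_closed compact_box)
  define x0 where "x0 = (\<lambda>i::nat. if i = 0 then 1 else (0::real))"
  have "\<And>b. (x0 b)^2 = (if b = 0 then 1 else 0)" unfolding x0_def by auto
  hence "nsq c x0 = 1" unfolding nsq_def using assms by (simp add: sum.delta)
  hence "x0 \<in> K" unfolding K_def x0_def using assms by auto
  hence ne: "K \<noteq> {}" by auto
  obtain x where xK: "x \<in> K" and xmax: "\<forall>y\<in>K. phi y \<le> phi x"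
    using continuous_attains_sup[OF cK ne, of phi] cont_phi unfolding phi_def by blast
  have x1: "nsq c x = 1" using xK unfolding K_def by auto
  have "phi z \<le> phi x * nsq c z" for z
  proof (cases "nsq c z = 0")
    case True
    hence "\<forall>b<c. z b = 0" unfolding nsq_def
      by (subst (asm) sum_nonneg_eq_0_iff) auto
    hence "phi z = 0" unfolding phi_def nsq_def by simp
    moreover have "phi x \<ge> 0" unfolding phi_def by (rule nsq_nonneg)
    ultimately show ?thesis using True by simp
  next
    case False
    hence npos: "nsq c z > 0" using nsq_nonneg[of c z] by linarith
    define nn where "nn = sqrt (nsq c z)"
    have nn: "nn > 0" "nn^2 = nsq c z" unfolding nn_def using npos by auto
    define z' where "z' = (\<lambda>b. if b < c then z b / nn else 0)"
    have "z' \<in> K"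
    proof -
      have "\<bar>z b\<bar> \<le> nn" if "b < c" for b
      proof -
        have "(z b)^2 \<le> nsq c z" unfolding nsq_def
          using that by (intro member_le_sum) auto
        thus ?thesis using nn by (metis real_sqrt_abs real_sqrt_le_mono nn_def)
      qed
      hence "z' \<in> Pi UNIV (\<lambda>i::nat. if i < c then {-1..1::real} else {0})"
        unfolding z'_def using nn by (auto simp: abs_le_iff divide_le_eq le_divide_eq) (smt (verit))
      moreover have "nsq c z' = 1"
      proof -
        have "nsq c z' = (\<Sum>b<c. (z b)^2 / nn^2)" unfolding nsq_def z'_def
          by (simp add: power_divide)
        also have "\<dots> = nsq c z / nn^2" unfolding nsq_def by (simp add: sum_divide_distrib)
        finally show ?thesis using nn npos by simp
      qed
      ultimately show ?thesis unfolding K_def by auto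
    qed
    hence "phi z' \<le> phi x" using xmax by auto
    moreover have "phi z' = phi z / nn^2"
    proof -
      have "phi z' = (\<Sum>a<r. ((\<Sum>b<c. w a b * z b) / nn)^2)" unfolding phi_def nsq_def z'_def
        by (simp add: sum_divide_distrib)
      also have "\<dots> = phi z / nn^2" unfolding phi_def nsq_def
        by (simp add: sum_divide_distrib[symmetric] power_divide)
      finally show ?thesis .
    qed
    ultimately show ?thesis using nn npos by (simp add: divide_le_eq mult.commute)
  qed
  thus ?thesis using x1 unfolding phi_def by blast
qed


lemma vv_nsq: "v \<in> carrier_vec n \<Longrightarrow> v \<bullet> v = nsq n (\<lambda>i. v $ i)"
  by (auto simp: scalar_prod_def nsq_def power2_eq_square atLeast0LessThan)

lemma sp_sum: "w \<in> carrier_vec n \<Longrightarrow> v \<bullet> w = (\<Sum>i<n. v $ i * w $ i)"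
  by (auto simp: scalar_prod_def atLeast0LessThan)

lemma mv_index: "M \<in> carrier_mat r c \<Longrightarrow> v \<in> carrier_vec c \<Longrightarrow> a < r \<Longrightarrow>
   (M *\<^sub>v v) $ a = (\<Sum>b<c. M $$ (a,b) * v $ b)"
  by (auto simp: scalar_prod_def atLeast0LessThan intro!: sum.cong)

lemma mtv_index: "M \<in> carrier_mat r c \<Longrightarrow> v \<in> carrier_vec r \<Longrightarrow> b < c \<Longrightarrow>
   (transpose_mat M *\<^sub>v v) $ b = (\<Sum>a<r. M $$ (a,b) * v $ a)"
  by (auto simp: scalar_prod_def atLeast0LessThan intro!: sum.cong)

lemma vnorm1: "v \<in> carrier_vec n \<Longrightarrow> vnorm v = 1 \<longleftrightarrow> nsq n (\<lambda>i. v $ i) = 1"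
  by (simp add: vnorm_def vv_nsq)

lemma triple_index:
  assumes M: "M \<in> carrier_mat r c" and st: "singular_triple M \<sigma> u v"
  shows "\<sigma> \<ge> 0" "u \<in> carrier_vec r" "v \<in> carrier_vec c"
    "nsq r (\<lambda>i. u $ i) = 1" "nsq c (\<lambda>i. v $ i) = 1"
    "\<And>a. a < r \<Longrightarrow> (\<Sum>b<c. M $$ (a,b) * v $ b) = \<sigma> * u $ a"
    "\<And>b. b < c \<Longrightarrow> (\<Sum>a<r. M $$ (a,b) * u $ a) = \<sigma> * v $ b"
proof -
  show u: "u \<in> carrier_vec r" and v: "v \<in> carrier_vec c" and "\<sigma> \<ge> 0"
    using st M unfolding singular_triple_def by auto
  show "nsq r (\<lambda>i. u $ i) = 1" "nsq c (\<lambda>i. v $ i) = 1"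
    using st u v vnorm1 unfolding singular_triple_def by auto
  fix a assume a: "a < r"
  have "(M *\<^sub>v v) $ a = (\<sigma> \<cdot>\<^sub>v u) $ a" using st unfolding singular_triple_def by simp
  thus "(\<Sum>b<c. M $$ (a,b) * v $ b) = \<sigma> * u $ a" using mv_index[OF M v a] a u by simp
next
  fix b assume b: "b < c"
  have u: "u \<in> carrier_vec r" using st M unfolding singular_triple_def by auto
  have "(transpose_mat M *\<^sub>v u) $ b = (\<sigma> \<cdot>\<^sub>v v) $ b" using st unfolding singular_triple_def by simp
  thus "(\<Sum>a<r. M $$ (a,b) * u $ a) = \<sigma> * v $ b"
    using mtv_index[OF M u b] b st M unfolding singular_triple_def by auto
qed

lemma lagrange:
  fixes w :: "nat \<Rightarrow> nat \<Rightarrow> real"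
  assumes x1: "nsq c x = 1"
    and mx: "\<forall>z. nsq r (\<lambda>a. \<Sum>b<c. w a b * z b) \<le> nsq r (\<lambda>a. \<Sum>b<c. w a b * x b) * nsq c z"
    and b0: "b0 < c"
  shows "(\<Sum>a<r. w a b0 * (\<Sum>b<c. w a b * x b)) = nsq r (\<lambda>a. \<Sum>b<c. w a b * x b) * x b0"
proof -
  define A where "A = (\<lambda>a. \<Sum>b<c. w a b * x b)"
  define mu where "mu = nsq r A"
  define y where "y = (\<lambda>b::nat. if b = b0 then 1 else (0::real))"
  have wy: "(\<Sum>b<c. w a b * y b) = w a b0" for a
    unfolding y_def using b0 by (simp add: if_distrib sum.delta cong: if_cong)
  have xy: "(\<Sum>b<c. x b * y b) = x b0"
    unfolding y_def using b0 by (simp add: if_distrib sum.delta cong: if_cong)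
  have yy: "nsq c y = 1"
  proof -
    have "(\<lambda>b. (y b)^2) = y" by (auto simp: y_def)
    hence "nsq c y = sum y {..<c}" unfolding nsq_def by metis
    thus ?thesis unfolding y_def using b0 by (simp add: sum.delta)
  qed
  have "(2 * (\<Sum>a<r. A a * w a b0) - 2 * mu * x b0) * e + (nsq r (\<lambda>a. w a b0) - mu) * e^2 \<le> 0" for e
  proof -
    have "nsq r (\<lambda>a. \<Sum>b<c. w a b * (x b + e * y b)) \<le> mu * nsq c (\<lambda>b. x b + e * y b)"
      using mx[rule_format, of "\<lambda>b. x b + e * y b"] unfolding mu_def A_def by simp
    moreover have "(\<lambda>a. \<Sum>b<c. w a b * (x b + e * y b)) = (\<lambda>a. A a + e * w a b0)"
      unfolding A_def by (auto simp: algebra_simps sum.distrib wy[symmetric] sum_distrib_left)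
    moreover have "nsq r (\<lambda>a. A a + e * w a b0) = mu + 2 * e * (\<Sum>a<r. A a * w a b0) + e^2 * nsq r (\<lambda>a. w a b0)"
      unfolding nsq_def mu_def
      by (simp add: power2_sum sum.distrib sum_distrib_left power_mult_distrib algebra_simps)
    moreover have "nsq c (\<lambda>b. x b + e * y b) = 1 + 2 * e * x b0 + e^2"
    proof -
      have "nsq c (\<lambda>b. x b + e * y b) = (\<Sum>b<c. (x b)^2 + (2 * e) * (x b * y b) + e^2 * (y b)^2)"
        unfolding nsq_def by (intro sum.cong) (auto simp: power2_sum power_mult_distrib)
      also have "\<dots> = nsq c x + (2 * e) * (\<Sum>b<c. x b * y b) + e^2 * nsq c y"
        unfolding nsq_def by (simp add: sum.distrib sum_distrib_left)
      finally show ?thesis using x1 yy xy by simp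
    qed
    ultimately show ?thesis by (simp add: algebra_simps power2_eq_square)
  qed
  hence "2 * (\<Sum>a<r. A a * w a b0) - 2 * mu * x b0 = 0" by (rule quad_lin_zero)
  thus ?thesis unfolding A_def mu_def by (simp add: mult.commute)
qed


lemma opnorm:
  assumes M: "M \<in> carrier_mat r c" and top: "top_singular_vectors M u v"
  shows "\<exists>\<sigma>. singular_triple M \<sigma> u v \<and>
           (\<forall>z. nsq r (\<lambda>a. \<Sum>b<c. M $$ (a,b) * z b) \<le> \<sigma>^2 * nsq c z)"
proof -
  obtain \<sigma> where st: "singular_triple M \<sigma> u v"
    and mx: "\<And>\<tau> u' v'. singular_triple M \<tau> u' v' \<Longrightarrow> \<tau> \<le> \<sigma>"
    using top unfolding top_singular_vectors_def by blast
  have sig0: "\<sigma> \<ge> 0" using st unfolding singular_triple_def by auto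
  define w where "w = (\<lambda>a b. M $$ (a,b))"
  have "nsq r (\<lambda>a. \<Sum>b<c. w a b * z b) \<le> \<sigma>^2 * nsq c z" for z
  proof (cases "c = 0")
    case True
    thus ?thesis by (simp add: nsq_def nsq_nonneg)
  next
    case False
    then obtain x where x1: "nsq c x = 1" and xm: "\<forall>z. nsq r (\<lambda>a. \<Sum>b<c. w a b * z b) \<le> nsq r (\<lambda>a. \<Sum>b<c. w a b * x b) * nsq c z"
      using exists_max[of c r w] by auto
    define A where "A = (\<lambda>a. \<Sum>b<c. w a b * x b)"
    define mu where "mu = nsq r A"
    have lag: "\<And>b0. b0 < c \<Longrightarrow> (\<Sum>a<r. w a b0 * A a) = mu * x b0"
      using lagrange[OF x1 xm] unfolding A_def mu_def by blast
    have mu0: "mu \<ge> 0" unfolding mu_def by (rule nsq_nonneg)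
    have "mu \<le> \<sigma>^2"
    proof (cases "mu = 0")
      case True thus ?thesis by simp
    next
      case False
      hence mupos: "mu > 0" using mu0 by simp
      define \<tau> where "\<tau> = sqrt mu"
      have tau: "\<tau> > 0" "\<tau>^2 = mu" "\<tau> * \<tau> = mu" unfolding \<tau>_def using mupos by auto
      define u' where "u' = vec r (\<lambda>a. A a / \<tau>)"
      define v' where "v' = vec c x"
      have u'c: "u' \<in> carrier_vec r" and v'c: "v' \<in> carrier_vec c" unfolding u'_def v'_def by auto
      have "singular_triple M \<tau> u' v'"
        unfolding singular_triple_def
      proof (intro conjI)
        show "\<tau> \<ge> 0" using tau by simp
        show "u' \<in> carrier_vec (dim_row M)" "v' \<in> carrier_vec (dim_col M)" using u'c v'c M by auto
        have "nsq r (\<lambda>i. u' $ i) = nsq r A / mu"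
          unfolding nsq_def u'_def using tau by (simp add: power_divide sum_divide_distrib)
        thus "vnorm u' = 1" using vnorm1[OF u'c] mupos unfolding mu_def by simp
        have "nsq c (\<lambda>i. v' $ i) = nsq c x" unfolding nsq_def v'_def by simp
        thus "vnorm v' = 1" using vnorm1[OF v'c] x1 by simp
        show "M *\<^sub>v v' = \<tau> \<cdot>\<^sub>v u'"
        proof (rule eq_vecI)
          show "dim_vec (M *\<^sub>v v') = dim_vec (\<tau> \<cdot>\<^sub>v u')" using M u'c by simp
          fix a assume "a < dim_vec (\<tau> \<cdot>\<^sub>v u')"
          hence a: "a < r" using u'c by simp
          have "(M *\<^sub>v v') $ a = A a" using mv_index[OF M v'c a] unfolding A_def w_def v'_def
            by (simp)
          also have "\<dots> = (\<tau> \<cdot>\<^sub>v u') $ a" using a tau unfolding u'_def by simp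
          finally show "(M *\<^sub>v v') $ a = (\<tau> \<cdot>\<^sub>v u') $ a" .
        qed
        show "transpose_mat M *\<^sub>v u' = \<tau> \<cdot>\<^sub>v v'"
        proof (rule eq_vecI)
          show "dim_vec (transpose_mat M *\<^sub>v u') = dim_vec (\<tau> \<cdot>\<^sub>v v')" using M v'c by simp
          fix b assume "b < dim_vec (\<tau> \<cdot>\<^sub>v v')"
          hence b: "b < c" using v'c by simp
          have "(transpose_mat M *\<^sub>v u') $ b = (\<Sum>a<r. w a b * A a) / \<tau>"
            using mtv_index[OF M u'c b] unfolding u'_def w_def
            by (simp add: sum_divide_distrib)
          also have "\<dots> = mu * x b / \<tau>" using lag[OF b] by simp
          also have "\<dots> = (\<tau> \<cdot>\<^sub>v v') $ b" using b tau unfolding v'_def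
            by (simp add: field_simps power2_eq_square)
          finally show "(transpose_mat M *\<^sub>v u') $ b = (\<tau> \<cdot>\<^sub>v v') $ b" .
        qed
      qed
      hence "\<tau> \<le> \<sigma>" by (rule mx)
      hence "\<tau>^2 \<le> \<sigma>^2" using tau by (intro power_mono) auto
      thus ?thesis using tau by simp
    qed
    moreover have "nsq r (\<lambda>a. \<Sum>b<c. w a b * z b) \<le> mu * nsq c z"
      using xm unfolding mu_def A_def by blast
    ultimately show ?thesis using nsq_nonneg[of c z]
      by (meson mult_right_mono order_trans)
  qed
  thus ?thesis using st unfolding w_def by blast
qed

lemma opnormT:
  fixes w :: "nat \<Rightarrow> nat \<Rightarrow> real"
  assumes "\<forall>z. nsq r (\<lambda>a. \<Sum>b<c. w a b * z b) \<le> s * nsq c z" "s \<ge> 0"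
  shows "nsq c (\<lambda>b. \<Sum>a<r. w a b * y a) \<le> s * nsq r y"
proof -
  define t where "t = (\<lambda>b. \<Sum>a<r. w a b * y a)"
  have "nsq c t = (\<Sum>a<r. y a * (\<Sum>b<c. w a b * t b))"
    unfolding nsq_def t_def power2_eq_square
    by (simp add: sum_distrib_left sum_distrib_right algebra_simps sum.swap[of _ "{..<c}"])
  also have "\<dots> \<le> sqrt (nsq r y) * sqrt (nsq r (\<lambda>a. \<Sum>b<c. w a b * t b))"
    using CS_abs[of y "\<lambda>a. \<Sum>b<c. w a b * t b" r] by (smt (verit))
  also have "\<dots> \<le> sqrt (nsq r y) * sqrt (s * nsq c t)"
    using assms(1) nsq_nonneg[of r y] by (intro mult_left_mono real_sqrt_le_mono) auto
  finally have *: "nsq c t \<le> sqrt (nsq r y) * sqrt s * sqrt (nsq c t)" by (simp add: real_sqrt_mult mult.assoc)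
  show ?thesis
  proof (cases "nsq c t = 0")
    case True thus ?thesis using assms nsq_nonneg[of r y] t_def by simp
  next
    case False
    hence p: "sqrt (nsq c t) > 0" using nsq_nonneg[of c t] by simp
    have "sqrt (nsq c t) * sqrt (nsq c t) \<le> sqrt (nsq r y) * sqrt s * sqrt (nsq c t)"
      using * nsq_nonneg[of c t] by simp
    hence "sqrt (nsq c t) \<le> sqrt (nsq r y) * sqrt s" using p by (rule mult_right_le_imp_le)
    hence "sqrt (nsq c t)^2 \<le> (sqrt (nsq r y) * sqrt s)^2" using nsq_nonneg[of c t] by (intro power_mono) auto
    thus ?thesis unfolding t_def using assms nsq_nonneg[of r y] nsq_nonneg[of c]
      by (simp add: power_mult_distrib mult.commute)
  qed
qed


definition fro :: "nat \<Rightarrow> nat \<Rightarrow> (nat \<Rightarrow> nat \<Rightarrow> real) \<Rightarrow> real" where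
  "fro r c w = (\<Sum>a<r. \<Sum>b<c. (w a b)^2)"

lemma fro_nonneg: "fro r c w \<ge> 0" unfolding fro_def by (simp add: sum_nonneg)

lemma rank1_dist:
  fixes w :: "nat \<Rightarrow> nat \<Rightarrow> real"
  assumes u1: "nsq r u = 1" and v1: "nsq c v = 1"
    and Wv: "\<And>a. a < r \<Longrightarrow> (\<Sum>b<c. w a b * v b) = \<sigma> * u a"
  shows "(\<Sum>a<r. \<Sum>b<c. (w a b - s * u a * v b)^2) = fro r c w - 2 * s * \<sigma> + s^2"
proof -
  have "(\<Sum>a<r. \<Sum>b<c. (w a b - s * u a * v b)^2) =
        (\<Sum>a<r. \<Sum>b<c. (w a b)^2 - (2 * s) * (u a * (w a b * v b)) + s^2 * ((u a)^2 * (v b)^2))"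
    by (intro sum.cong refl) (simp add: power2_diff power_mult_distrib algebra_simps)
  also have "\<dots> = fro r c w - (2 * s) * (\<Sum>a<r. u a * (\<Sum>b<c. w a b * v b)) + s^2 * (\<Sum>a<r. (u a)^2 * nsq c v)"
    unfolding fro_def nsq_def
    by (simp add: sum.distrib sum_subtractf sum_distrib_left)
  also have "(\<Sum>a<r. u a * (\<Sum>b<c. w a b * v b)) = \<sigma>"
  proof -
    have "(\<Sum>a<r. u a * (\<Sum>b<c. w a b * v b)) = (\<Sum>a<r. \<sigma> * (u a)^2)"
      using Wv by (intro sum.cong) (auto simp: power2_eq_square)
    also have "\<dots> = \<sigma>" using u1 unfolding nsq_def by (simp add: sum_distrib_left[symmetric])
    finally show ?thesis .
  qed
  also have "(\<Sum>a<r. (u a)^2 * nsq c v) = 1" using u1 v1 unfolding nsq_def by (simp add: sum_distrib_right[symmetric])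
  finally show ?thesis by simp
qed

lemma sigma_le_fro:
  fixes w :: "nat \<Rightarrow> nat \<Rightarrow> real"
  assumes u1: "nsq r u = 1" and v1: "nsq c v = 1"
    and Wv: "\<And>a. a < r \<Longrightarrow> (\<Sum>b<c. w a b * v b) = \<sigma> * u a"
  shows "\<sigma>^2 \<le> fro r c w"
proof -
  have "0 \<le> (\<Sum>a<r. \<Sum>b<c. (w a b - \<sigma> * u a * v b)^2)" by (simp add: sum_nonneg)
  also have "\<dots> = fro r c w - \<sigma>^2" using rank1_dist[OF u1 v1 Wv, of \<sigma>] by (simp add: power2_eq_square)
  finally show ?thesis by simp
qed

lemma transpose_split:
  fixes w :: "nat \<Rightarrow> nat \<Rightarrow> real"
  assumes u1: "nsq r u = 1" and v1: "nsq c v = 1"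
    and Wv: "\<And>a. a < r \<Longrightarrow> (\<Sum>b<c. w a b * v b) = \<sigma> * u a"
  shows "nsq c (\<lambda>b. \<Sum>a<r. w a b * x a) \<le> \<sigma>^2 * (\<Sum>a<r. u a * x a)^2 + (fro r c w - \<sigma>^2) * nsq r x"
proof -
  define e where "e = (\<lambda>a b. w a b - \<sigma> * u a * v b)"
  define al where "al = (\<Sum>a<r. u a * x a)"
  define t where "t = (\<lambda>b. \<Sum>a<r. e a b * x a)"
  have split: "(\<Sum>a<r. w a b * x a) = \<sigma> * al * v b + t b" for b
    unfolding t_def e_def al_def
    by (simp add: algebra_simps sum_subtractf sum_distrib_left sum_distrib_right)
  have orth: "(\<Sum>b<c. v b * t b) = 0"
  proof -
    have "(\<Sum>b<c. v b * t b) = (\<Sum>a<r. x a * (\<Sum>b<c. w a b * v b)) - \<sigma> * al * nsq c v"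
      unfolding t_def e_def al_def nsq_def
      by (simp add: algebra_simps sum_subtractf sum_distrib_left sum_distrib_right power2_eq_square
          sum.swap[of _ "{..<c}"])
    also have "(\<Sum>a<r. x a * (\<Sum>b<c. w a b * v b)) = \<sigma> * al"
      unfolding al_def using Wv by (simp add: sum_distrib_left algebra_simps)
    finally show ?thesis using v1 by simp
  qed
  have "nsq c (\<lambda>b. \<Sum>a<r. w a b * x a) = (\<Sum>b<c. (\<sigma> * al)^2 * (v b)^2 + 2 * (\<sigma> * al) * (v b * t b) + (t b)^2)"
    unfolding nsq_def split by (intro sum.cong) (auto simp: power2_sum power_mult_distrib algebra_simps)
  also have "\<dots> = (\<sigma> * al)^2 * nsq c v + 2 * (\<sigma> * al) * (\<Sum>b<c. v b * t b) + nsq c t"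
    unfolding nsq_def by (simp add: sum.distrib sum_distrib_left)
  also have "\<dots> = \<sigma>^2 * al^2 + nsq c t" using orth v1 by (simp add: power_mult_distrib)
  also have "nsq c t \<le> (\<Sum>a<r. \<Sum>b<c. (e a b)^2) * nsq r x"
    unfolding t_def by (rule appT_bound)
  also have "(\<Sum>a<r. \<Sum>b<c. (e a b)^2) = fro r c w - \<sigma>^2"
    unfolding e_def using rank1_dist[OF u1 v1 Wv, of \<sigma>] by (simp add: power2_eq_square)
  finally show ?thesis unfolding al_def by simp
qed


fun pvec :: "(nat \<Rightarrow> nat) \<Rightarrow> (nat \<Rightarrow> real mat) \<Rightarrow> (nat \<Rightarrow> real) \<Rightarrow> nat \<Rightarrow> nat \<Rightarrow> real" where
  "pvec d Ws x 0 = x"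
| "pvec d Ws x (Suc j) = (\<lambda>a. \<Sum>c<d j. Ws (Suc j) $$ (a,c) * pvec d Ws x j c)"

fun qq :: "nat \<Rightarrow> (nat \<Rightarrow> nat) \<Rightarrow> (nat \<Rightarrow> real mat) \<Rightarrow> nat \<Rightarrow> nat \<Rightarrow> real" where
  "qq L d Ws 0 = (\<lambda>a. 1)"
| "qq L d Ws (Suc m) = (\<lambda>b. \<Sum>a<d (L - m). Ws (L - m) $$ (a,b) * qq L d Ws m a)"

definition qv :: "nat \<Rightarrow> (nat \<Rightarrow> nat) \<Rightarrow> (nat \<Rightarrow> real mat) \<Rightarrow> nat \<Rightarrow> nat \<Rightarrow> real" where
  "qv L d Ws j = qq L d Ws (L - j)"

lemma qv_L: "qv L d Ws L = (\<lambda>a. 1)" by (simp add: qv_def)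

lemma qv_step: "j < L \<Longrightarrow> qv L d Ws j = (\<lambda>b. \<Sum>a<d (Suc j). Ws (Suc j) $$ (a,b) * qv L d Ws (Suc j) a)"
proof -
  assume j: "j < L"
  hence "L - j = Suc (L - Suc j)" by simp
  moreover have "L - (L - Suc j) = Suc j" using j by simp
  ultimately show ?thesis unfolding qv_def by simp
qed

lemma split_ident:
  assumes dL: "d L = 1" and j: "j \<le> L"
  shows "pvec d Ws x L 0 = (\<Sum>a<d j. qv L d Ws j a * pvec d Ws x j a)"
proof -
  have "\<forall>j. L - j = m \<longrightarrow> j \<le> L \<longrightarrow> pvec d Ws x L 0 = (\<Sum>a<d j. qv L d Ws j a * pvec d Ws x j a)" for m
  proof (induction m)
    case 0
    show ?case using dL by (auto simp: qv_L)
  next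
    case (Suc m)
    show ?case
    proof (intro allI impI)
      fix j assume a: "L - j = Suc m" "j \<le> L"
      hence jL: "j < L" by simp
      have "L - Suc j = m" using a by simp
      hence "pvec d Ws x L 0 = (\<Sum>a<d (Suc j). qv L d Ws (Suc j) a * pvec d Ws x (Suc j) a)"
        using Suc.IH jL by (simp del: pvec.simps)
      also have "\<dots> = (\<Sum>a<d (Suc j). \<Sum>c<d j. qv L d Ws (Suc j) a * Ws (Suc j) $$ (a,c) * pvec d Ws x j c)"
        by (simp add: sum_distrib_left mult.assoc)
      also have "\<dots> = (\<Sum>c<d j. \<Sum>a<d (Suc j). qv L d Ws (Suc j) a * Ws (Suc j) $$ (a,c) * pvec d Ws x j c)"
        by (rule sum.swap)
      also have "\<dots> = (\<Sum>c<d j. qv L d Ws j c * pvec d Ws x j c)"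
        using qv_step[OF jL] by (simp add: sum_distrib_left algebra_simps)
      finally show "pvec d Ws x L 0 = (\<Sum>a<d j. qv L d Ws j a * pvec d Ws x j a)" .
    qed
  qed
  thus ?thesis using j by blast
qed

lemma pvec_cong: "(\<And>i. 1 \<le> i \<Longrightarrow> i \<le> j \<Longrightarrow> Ws i = Ws' i) \<Longrightarrow> pvec d Ws x j = pvec d Ws' x j"
proof (induction j)
  case 0 thus ?case by simp
next
  case (Suc j)
  have "pvec d Ws x j = pvec d Ws' x j" using Suc by auto
  moreover have "Ws (Suc j) = Ws' (Suc j)" using Suc by auto
  ultimately show ?case by simp
qed

lemma qq_cong: "m \<le> L \<Longrightarrow> (\<And>i. L - m < i \<Longrightarrow> i \<le> L \<Longrightarrow> Ws i = Ws' i) \<Longrightarrow> qq L d Ws m = qq L d Ws' m"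
proof (induction m)
  case 0 thus ?case by simp
next
  case (Suc m)
  have "qq L d Ws m = qq L d Ws' m" using Suc by auto
  moreover have "Ws (L - m) = Ws' (L - m)" using Suc.prems by auto
  ultimately show ?case by simp
qed

lemma qv_cong: "j \<le> L \<Longrightarrow> (\<And>i. j < i \<Longrightarrow> i \<le> L \<Longrightarrow> Ws i = Ws' i) \<Longrightarrow> qv L d Ws j = qv L d Ws' j"
  unfolding qv_def by (rule qq_cong) auto

lemma wd_layer: "weights_dims L d Ws \<Longrightarrow> Suc j \<le> L \<Longrightarrow> Ws (Suc j) \<in> carrier_mat (d (Suc j)) (d j)"
  unfolding weights_dims_def by (drule bspec[of _ _ "Suc j"]) auto

lemma prod_layers_carrier:
  "weights_dims L d Ws \<Longrightarrow> j \<le> L \<Longrightarrow> prod_layers d Ws j \<in> carrier_mat (d j) (d 0)"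
proof (induction j)
  case 0 thus ?case by simp
next
  case (Suc j)
  have "Ws (Suc j) \<in> carrier_mat (d (Suc j)) (d j)" using Suc.prems wd_layer by auto
  thus ?case using Suc by auto
qed

lemma prod_layers_pvec:
  assumes wd: "weights_dims L d Ws" and z: "z \<in> carrier_vec (d 0)"
  shows "j \<le> L \<Longrightarrow> prod_layers d Ws j *\<^sub>v z = vec (d j) (pvec d Ws (\<lambda>i. z $ i) j)"
proof (induction j)
  case 0 thus ?case using z by (auto intro!: eq_vecI)
next
  case (Suc j)
  have W: "Ws (Suc j) \<in> carrier_mat (d (Suc j)) (d j)" using Suc.prems wd wd_layer by auto
  have P: "prod_layers d Ws j \<in> carrier_mat (d j) (d 0)" using prod_layers_carrier[OF wd] Suc.prems by auto
  have "prod_layers d Ws (Suc j) *\<^sub>v z = Ws (Suc j) *\<^sub>v (prod_layers d Ws j *\<^sub>v z)"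
    using W P z by simp
  also have "\<dots> = Ws (Suc j) *\<^sub>v vec (d j) (pvec d Ws (\<lambda>i. z $ i) j)" using Suc by simp
  also have "\<dots> = vec (d (Suc j)) (pvec d Ws (\<lambda>i. z $ i) (Suc j))"
    by (rule eq_vecI) (use W in \<open>auto simp: scalar_prod_def atLeast0LessThan intro!: sum.cong\<close>)
  finally show ?case .
qed

lemma adj_carrier: "adj_mat' nn E ^\<^sub>m L \<in> carrier_mat nn nn"
proof -
  have "adj_mat' nn E \<in> carrier_mat nn nn" unfolding adj_mat'_def adj_mat_def by auto
  thus ?thesis by (rule pow_carrier_mat)
qed

lemma agg_carrier: "X \<in> carrier_mat d0 nn \<Longrightarrow> agg_feat L nn E X \<in> carrier_vec d0"
  unfolding agg_feat_def carrier_vec_def by auto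

lemma agg_smult: "X \<in> carrier_mat d0 nn \<Longrightarrow> agg_feat L nn E (c \<cdot>\<^sub>m X) = c \<cdot>\<^sub>v agg_feat L nn E X"
  unfolding agg_feat_def adj_mat'_def ones_vec_def
  by (auto intro!: eq_vecI simp: scalar_prod_def sum_distrib_left algebra_simps)


locale mp =
  fixes L k :: nat
    and d :: "nat \<Rightarrow> nat"
    and n :: "nat \<Rightarrow> nat"
    and G :: "nat \<Rightarrow> nat \<Rightarrow> nat \<Rightarrow> bool"
    and X :: "nat \<Rightarrow> real mat"
    and y :: "nat \<Rightarrow> real"
    and loss loss' :: "real \<Rightarrow> real"
    and W :: "real \<Rightarrow> nat \<Rightarrow> real mat"
    and u v :: "real \<Rightarrow> nat \<Rightarrow> real vec"
  assumes L_pos: "L \<ge> 1"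
    and dims_pos: "\<forall>j\<le>L. d j > 0"
    and d_L: "d L = 1"
    and feats: "\<forall>i<k. X i \<in> carrier_mat (d 0) (n i)"
    and labels: "\<forall>i<k. y i \<in> {-1, 1}"
    and separable: "\<exists>ub. ub \<in> carrier_vec (d 0) \<and>
                     (\<forall>i<k. y i * (ub \<bullet> agg_feat L (n i) (G i) (X i)) > 0)"
    and loss_pos: "\<forall>x. loss x > 0"
    and loss_deriv: "\<forall>x. (loss has_real_derivative loss' x) (at x)"
    and loss'_cont: "continuous_on UNIV loss'"
    and loss'_neg: "\<forall>x. loss' x < 0"
    and flow: "gradient_flow L d (risk loss L d k n G X y) W"
    and init: "risk loss L d k n G X y (W 0) < risk loss L d k n G X y (zero_weights d)"
    and sing: "\<forall>t\<ge>0. \<forall>j\<in>{1..L}. top_singular_vectors (W t j) (u t j) (v t j)"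
begin

definition zv :: "nat \<Rightarrow> real vec" where
  "zv i = agg_feat L (n i) (G i) (y i \<cdot>\<^sub>m X i)"

definition zz :: "nat \<Rightarrow> nat \<Rightarrow> real" where
  "zz i = (\<lambda>b. zv i $ b)"

abbreviation Rk :: "(nat \<Rightarrow> real mat) \<Rightarrow> real" where
  "Rk \<equiv> risk loss L d k n G X y"

definition mar :: "(nat \<Rightarrow> real mat) \<Rightarrow> nat \<Rightarrow> real" where
  "mar Ws i = pvec d Ws (zz i) L 0"

lemma zv_carrier: "i < k \<Longrightarrow> zv i \<in> carrier_vec (d 0)"
  unfolding zv_def using feats by (intro agg_carrier) auto

lemma risk_eq:
  assumes wd: "weights_dims L d Ws"
  shows "Rk Ws = (1 / real k) * (\<Sum>i<k. loss (mar Ws i))"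
proof -
  have "(prod_layers d Ws L *\<^sub>v zv i) $ 0 = mar Ws i" if i: "i < k" for i
    using prod_layers_pvec[OF wd zv_carrier[OF i], of L] d_L unfolding mar_def zz_def by simp
  thus ?thesis unfolding risk_def zv_def[symmetric] by simp
qed

lemma upd_other: "i \<noteq> j \<Longrightarrow> upd_entry Ws j a b x i = Ws i"
  unfolding upd_entry_def by simp

lemma upd_wd:
  assumes wd: "weights_dims L d Ws" and j: "j \<in> {1..L}"
  shows "weights_dims L d (upd_entry Ws j a b x)"
  unfolding weights_dims_def
proof
  fix i assume i: "i \<in> {1..L}"
  show "upd_entry Ws j a b x i \<in> carrier_mat (d i) (d (i-1))"
  proof (cases "i = j")
    case True
    have "Ws j \<in> carrier_mat (d j) (d (j-1))" using wd j unfolding weights_dims_def by blast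
    hence "dim_row (Ws j) = d j" "dim_col (Ws j) = d (j - 1)" by auto
    thus ?thesis using True unfolding upd_entry_def by simp
  next
    case False thus ?thesis using wd i unfolding weights_dims_def upd_entry_def by simp
  qed
qed

lemma upd_idx:
  assumes "Ws j \<in> carrier_mat r c" "p < r" "q < c"
  shows "upd_entry Ws j a b x j $$ (p,q) = (if (p,q) = (a,b) then x else Ws j $$ (p,q))"
  using assms unfolding upd_entry_def by auto

lemma mar_upd:
  assumes wd: "weights_dims L d Ws" and j0: "Suc j0 \<le> L" and a: "a < d (Suc j0)" and b: "b < d j0"
  shows "mar (upd_entry Ws (Suc j0) a b x) i =
         mar Ws i + qv L d Ws (Suc j0) a * pvec d Ws (zz i) j0 b * (x - Ws (Suc j0) $$ (a,b))"
proof -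
  define j where "j = Suc j0"
  define Ws' where "Ws' = upd_entry Ws j a b x"
  have Wj: "Ws j \<in> carrier_mat (d j) (d j0)" using wd_layer[OF wd j0] unfolding j_def .
  have q: "qv L d Ws' j = qv L d Ws j"
    using j0 unfolding j_def Ws'_def by (intro qv_cong) (auto simp: upd_other)
  have p: "pvec d Ws' (zz i) j0 = pvec d Ws (zz i) j0"
    unfolding j_def Ws'_def by (intro pvec_cong) (auto simp: upd_other)
  define qa where "qa = qv L d Ws j"
  define pa where "pa = pvec d Ws (zz i) j0"
  define del where "del = x - Ws j $$ (a,b)"
  have "mar Ws' i = (\<Sum>c<d j. qa c * pvec d Ws' (zz i) j c)"
    unfolding mar_def qa_def using split_ident[where d=d and L=L, OF d_L, of j Ws' "zz i"] j0 q unfolding j_def by simp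
  also have "\<dots> = (\<Sum>c<d j. qa c * (\<Sum>e<d j0. (Ws j $$ (c,e) + (if c = a \<and> e = b then del else 0)) * pa e))"
  proof (intro sum.cong refl)
    fix c assume c: "c \<in> {..<d j}"
    have "pvec d Ws' (zz i) j c = (\<Sum>e<d j0. Ws' j $$ (c,e) * pa e)"
      unfolding j_def pa_def using p by simp
    also have "\<dots> = (\<Sum>e<d j0. (Ws j $$ (c,e) + (if c = a \<and> e = b then del else 0)) * pa e)"
      using c unfolding Ws'_def del_def by (intro sum.cong refl) (auto simp: upd_idx[where Ws=Ws and j=j, OF Wj])
    finally show "qa c * pvec d Ws' (zz i) j c = qa c * (\<Sum>e<d j0. (Ws j $$ (c,e) + (if c = a \<and> e = b then del else 0)) * pa e)"
      by simp
  qed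
  also have "\<dots> = (\<Sum>c<d j. qa c * (\<Sum>e<d j0. Ws j $$ (c,e) * pa e)) + (\<Sum>c<d j. qa c * (if c = a then del * pa b else 0))"
  proof -
    have "(\<Sum>e<d j0. (if c = a \<and> e = b then del else 0) * pa e) = (if c = a then del * pa b else 0)" for c
    proof -
      have "(\<lambda>e. (if c = a \<and> e = b then del else 0) * pa e) = (\<lambda>e. if e = b then (if c = a then del * pa b else 0) else 0)"
        by auto
      hence "(\<Sum>e<d j0. (if c = a \<and> e = b then del else 0) * pa e) = (\<Sum>e<d j0. if e = b then (if c = a then del * pa b else 0) else 0)"
        by metis
      also have "\<dots> = (if c = a then del * pa b else 0)" using b by (subst sum.delta) auto
      finally show ?thesis .
    qed
    thus ?thesis by (simp add: distrib_right sum.distrib distrib_left)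
  qed
  also have "(\<Sum>c<d j. qa c * (if c = a then del * pa b else 0)) = qa a * pa b * del"
  proof -
    have "(\<lambda>c. qa c * (if c = a then del * pa b else 0)) = (\<lambda>c. if c = a then qa a * pa b * del else 0)"
      by auto
    hence "(\<Sum>c<d j. qa c * (if c = a then del * pa b else 0)) = (\<Sum>c<d j. if c = a then qa a * pa b * del else 0)"
      by metis
    also have "\<dots> = qa a * pa b * del" using a unfolding j_def by (subst sum.delta) auto
    finally show ?thesis .
  qed
  also have "(\<Sum>c<d j. qa c * (\<Sum>e<d j0. Ws j $$ (c,e) * pa e)) = mar Ws i"
    unfolding mar_def qa_def pa_def using split_ident[where d=d and L=L, OF d_L, of j Ws "zz i"] j0 unfolding j_def by simp
  finally show ?thesis unfolding Ws'_def qa_def pa_def del_def j_def by simp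
qed

lemma grad_formula:
  assumes wd: "weights_dims L d Ws" and j: "j \<in> {1..L}" and a: "a < d j" and b: "b < d (j - 1)"
  shows "grad_entry Rk Ws j a b =
         (1 / real k) * (\<Sum>i<k. loss' (mar Ws i) * (qv L d Ws j a * pvec d Ws (zz i) (j - 1) b))"
proof -
  obtain j0 where j0: "j = Suc j0" using j by (cases j) auto
  have j0L: "Suc j0 \<le> L" using j j0 by simp
  define x0 where "x0 = Ws j $$ (a,b)"
  define B where "B = (\<lambda>i. qv L d Ws j a * pvec d Ws (zz i) j0 b)"
  have eq: "Rk (upd_entry Ws j a b x) = (1 / real k) * (\<Sum>i<k. loss (mar Ws i + B i * (x - x0)))" for x
  proof -
    have "Rk (upd_entry Ws j a b x) = (1 / real k) * (\<Sum>i<k. loss (mar (upd_entry Ws j a b x) i))"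
      by (rule risk_eq[OF upd_wd[OF wd j]])
    also have "\<dots> = (1 / real k) * (\<Sum>i<k. loss (mar Ws i + B i * (x - x0)))"
      using mar_upd[OF wd j0L, of a b] a b j0 unfolding B_def x0_def by simp
    finally show ?thesis .
  qed
  have "((\<lambda>x. (1 / real k) * (\<Sum>i<k. loss (mar Ws i + B i * (x - x0)))) has_real_derivative
         (1 / real k) * (\<Sum>i<k. loss' (mar Ws i) * B i)) (at x0)"
  proof (intro DERIV_cmult DERIV_sum)
    fix i
    have "((\<lambda>x. mar Ws i + B i * (x - x0)) has_real_derivative B i) (at x0)"
      by (auto intro!: derivative_eq_intros)
    moreover have "(loss has_real_derivative loss' (mar Ws i + B i * (x0 - x0))) (at (mar Ws i + B i * (x0 - x0)))"
      using loss_deriv by blast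
    ultimately show "((\<lambda>x. loss (mar Ws i + B i * (x - x0))) has_real_derivative loss' (mar Ws i) * B i) (at x0)"
      using DERIV_chain2[of loss "loss' (mar Ws i)" "\<lambda>x. mar Ws i + B i * (x - x0)" x0 "B i" UNIV] by simp
  qed
  hence "deriv (\<lambda>x. Rk (upd_entry Ws j a b x)) x0 = (1 / real k) * (\<Sum>i<k. loss' (mar Ws i) * B i)"
    unfolding eq by (rule DERIV_imp_deriv)
  thus ?thesis unfolding grad_entry_def x0_def B_def using j0 by simp
qed

end


lemma flow_mvt:
  fixes f f' :: "real \<Rightarrow> real"
  assumes der: "\<forall>t\<ge>0. (f has_real_derivative f' t) (at t within {0..})"
    and a: "0 \<le> a" and ab: "a \<le> b"
  shows "\<exists>z. a \<le> z \<and> z \<le> b \<and> f b - f a = (b - a) * f' z"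
proof (cases "a = b")
  case True thus ?thesis by auto
next
  case False
  hence ab': "a < b" using ab by simp
  have "continuous (at t within {0..}) f" if "t \<ge> 0" for t
    using der that DERIV_continuous by blast
  hence "continuous_on {0..} f" by (simp add: continuous_on_eq_continuous_within)
  hence cont: "continuous_on {a..b} f" by (rule continuous_on_subset) (use a in auto)
  have dat: "DERIV f x :> f' x" if "0 < x" for x
  proof -
    have "x \<in> interior {0::real..}" using that by simp
    hence "at x within {0..} = at x" by (rule at_within_interior)
    moreover have "(f has_real_derivative f' x) (at x within {0..})" using der that by simp
    ultimately show ?thesis by simp
  qed
  have "f differentiable (at x)" if "a < x" "x < b" for x
    using dat[of x] that a unfolding real_differentiable_def by auto
  then obtain l z where z: "a < z" "z < b" "DERIV f z :> l" "f b - f a = (b - a) * l"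
    using MVT[OF ab' cont] by blast
  have "l = f' z" using DERIV_unique[OF z(3) dat] z a by simp
  thus ?thesis using z by (intro exI[of _ z]) auto
qed

lemma flow_mono:
  fixes f f' :: "real \<Rightarrow> real"
  assumes der: "\<forall>t\<ge>0. (f has_real_derivative f' t) (at t within {0..})"
    and nonpos: "\<forall>t\<ge>0. f' t \<le> 0"
    and a: "0 \<le> a" and ab: "a \<le> b"
  shows "f b \<le> f a"
proof -
  obtain z where "a \<le> z" "z \<le> b" "f b - f a = (b - a) * f' z" using flow_mvt[OF der a ab] by blast
  moreover have "(b - a) * f' z \<le> 0" using nonpos ab \<open>a \<le> z\<close> a by (simp add: mult_nonneg_nonpos)
  ultimately show ?thesis by simp
qed

lemma flow_const:
  fixes f :: "real \<Rightarrow> real"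
  assumes der: "\<forall>t\<ge>0. (f has_real_derivative 0) (at t within {0..})"
    and t: "0 \<le> t"
  shows "f t = f 0"
  using flow_mvt[of f "\<lambda>_. 0" 0 t] der t by auto


lemma swap3:
  fixes c :: "_ \<Rightarrow> real"
  shows "(\<Sum>i\<in>I. c i * (\<Sum>j\<in>J. \<Sum>a\<in>A j. \<Sum>b\<in>B j. f i j a b)) =
   (\<Sum>j\<in>J. \<Sum>a\<in>A j. \<Sum>b\<in>B j. \<Sum>i\<in>I. c i * f i j a b)"
proof -
  have "(\<Sum>i\<in>I. c i * (\<Sum>j\<in>J. \<Sum>a\<in>A j. \<Sum>b\<in>B j. f i j a b)) =
        (\<Sum>i\<in>I. \<Sum>j\<in>J. \<Sum>a\<in>A j. \<Sum>b\<in>B j. c i * f i j a b)"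
    by (simp add: sum_distrib_left)
  also have "\<dots> = (\<Sum>j\<in>J. \<Sum>i\<in>I. \<Sum>a\<in>A j. \<Sum>b\<in>B j. c i * f i j a b)"
    by (rule sum.swap)
  also have "\<dots> = (\<Sum>j\<in>J. \<Sum>a\<in>A j. \<Sum>i\<in>I. \<Sum>b\<in>B j. c i * f i j a b)"
    by (intro sum.cong refl) (rule sum.swap)
  also have "\<dots> = (\<Sum>j\<in>J. \<Sum>a\<in>A j. \<Sum>b\<in>B j. \<Sum>i\<in>I. c i * f i j a b)"
    by (intro sum.cong refl) (rule sum.swap)
  finally show ?thesis .
qed

context mp begin

definition gr :: "real \<Rightarrow> nat \<Rightarrow> nat \<Rightarrow> nat \<Rightarrow> real" where
  "gr t j a b = grad_entry Rk (W t) j a b"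

lemma wdt: "t \<ge> 0 \<Longrightarrow> weights_dims L d (W t)"
  using flow unfolding gradient_flow_def by auto

lemma dw: "t \<ge> 0 \<Longrightarrow> Suc j \<le> L \<Longrightarrow> a < d (Suc j) \<Longrightarrow> b < d j \<Longrightarrow>
  ((\<lambda>s. W s (Suc j) $$ (a,b)) has_real_derivative - gr t (Suc j) a b) (at t within {0..})"
  using flow unfolding gradient_flow_def gr_def by auto

lemma gr_eq: "t \<ge> 0 \<Longrightarrow> Suc j \<le> L \<Longrightarrow> a < d (Suc j) \<Longrightarrow> b < d j \<Longrightarrow>
  gr t (Suc j) a b = (1 / real k) * (\<Sum>i<k. loss' (mar (W t) i) * (qv L d (W t) (Suc j) a * pvec d (W t) (zz i) j b))"
  unfolding gr_def using grad_formula[OF wdt, of t "Suc j" a b] by simp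

fun PD :: "real \<Rightarrow> (nat \<Rightarrow> real) \<Rightarrow> nat \<Rightarrow> nat \<Rightarrow> real" where
  "PD t x 0 = (\<lambda>c. 0)"
| "PD t x (Suc j) = (\<lambda>c. \<Sum>e<d j. (- gr t (Suc j) c e) * pvec d (W t) x j e + W t (Suc j) $$ (c,e) * PD t x j e)"

lemma dpvec: "t \<ge> 0 \<Longrightarrow> j \<le> L \<Longrightarrow> c < d j \<Longrightarrow>
  ((\<lambda>s. pvec d (W s) x j c) has_real_derivative PD t x j c) (at t within {0..})"
proof (induction j arbitrary: c)
  case 0 thus ?case by simp
next
  case (Suc j)
  have "((\<lambda>s. \<Sum>e<d j. W s (Suc j) $$ (c,e) * pvec d (W s) x j e) has_real_derivative
        (\<Sum>e<d j. (- gr t (Suc j) c e) * pvec d (W t) x j e + W t (Suc j) $$ (c,e) * PD t x j e)) (at t within {0..})"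
  proof (rule DERIV_sum)
    fix e assume e: "e \<in> {..<d j}"
    have "((\<lambda>s. W s (Suc j) $$ (c,e)) has_real_derivative - gr t (Suc j) c e) (at t within {0..})"
      using dw Suc.prems e by auto
    moreover have "((\<lambda>s. pvec d (W s) x j e) has_real_derivative PD t x j e) (at t within {0..})"
      using Suc.IH Suc.prems e by auto
    ultimately have "((\<lambda>s. W s (Suc j) $$ (c,e) * pvec d (W s) x j e) has_real_derivative
        (- gr t (Suc j) c e) * pvec d (W t) x j e + PD t x j e * W t (Suc j) $$ (c,e)) (at t within {0..})"
      by (rule DERIV_mult)
    thus "((\<lambda>s. W s (Suc j) $$ (c,e) * pvec d (W s) x j e) has_real_derivative
        (- gr t (Suc j) c e) * pvec d (W t) x j e + W t (Suc j) $$ (c,e) * PD t x j e) (at t within {0..})"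
      by (simp add: mult.commute)
  qed
  thus ?case by simp
qed

lemma PD_ident: "j \<le> L \<Longrightarrow> (\<Sum>c<d j. qv L d (W t) j c * PD t x j c) =
  (\<Sum>jj<j. \<Sum>a<d (Suc jj). \<Sum>b<d jj. qv L d (W t) (Suc jj) a * (- gr t (Suc jj) a b) * pvec d (W t) x jj b)"
proof (induction j)
  case 0 thus ?case by simp
next
  case (Suc j)
  have jL: "j < L" using Suc.prems by simp
  have "(\<Sum>c<d (Suc j). qv L d (W t) (Suc j) c * PD t x (Suc j) c) =
        (\<Sum>c<d (Suc j). \<Sum>e<d j. qv L d (W t) (Suc j) c * (- gr t (Suc j) c e) * pvec d (W t) x j e)
      + (\<Sum>c<d (Suc j). \<Sum>e<d j. qv L d (W t) (Suc j) c * W t (Suc j) $$ (c,e) * PD t x j e)"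
  proof -
    have "(\<Sum>c<d (Suc j). qv L d (W t) (Suc j) c * PD t x (Suc j) c) =
        (\<Sum>c<d (Suc j). \<Sum>e<d j. qv L d (W t) (Suc j) c * (- gr t (Suc j) c e) * pvec d (W t) x j e
          + qv L d (W t) (Suc j) c * W t (Suc j) $$ (c,e) * PD t x j e)"
      by (simp add: sum_distrib_left distrib_left mult.assoc right_diff_distrib)
    thus ?thesis by (simp only: sum.distrib)
  qed
  also have "(\<Sum>c<d (Suc j). \<Sum>e<d j. qv L d (W t) (Suc j) c * W t (Suc j) $$ (c,e) * PD t x j e)
           = (\<Sum>e<d j. qv L d (W t) j e * PD t x j e)"
  proof -
    have "(\<Sum>c<d (Suc j). \<Sum>e<d j. qv L d (W t) (Suc j) c * W t (Suc j) $$ (c,e) * PD t x j e)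
        = (\<Sum>e<d j. \<Sum>c<d (Suc j). qv L d (W t) (Suc j) c * W t (Suc j) $$ (c,e) * PD t x j e)"
      by (rule sum.swap)
    also have "\<dots> = (\<Sum>e<d j. qv L d (W t) j e * PD t x j e)"
      using qv_step[OF jL, of d "W t"] by (simp add: sum_distrib_left sum_distrib_right algebra_simps)
    finally show ?thesis .
  qed
  finally show ?case using Suc by simp
qed

lemma dmar: "t \<ge> 0 \<Longrightarrow>
  ((\<lambda>s. mar (W s) i) has_real_derivative
     (\<Sum>jj<L. \<Sum>a<d (Suc jj). \<Sum>b<d jj. qv L d (W t) (Suc jj) a * (- gr t (Suc jj) a b) * pvec d (W t) (zz i) jj b))
   (at t within {0..})"
proof -
  assume t: "t \<ge> 0"
  have "PD t (zz i) L 0 = (\<Sum>c<d L. qv L d (W t) L c * PD t (zz i) L c)"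
    using d_L by (simp add: qv_L)
  also have "\<dots> = (\<Sum>jj<L. \<Sum>a<d (Suc jj). \<Sum>b<d jj. qv L d (W t) (Suc jj) a * (- gr t (Suc jj) a b) * pvec d (W t) (zz i) jj b)"
    by (rule PD_ident) simp
  finally show ?thesis using dpvec[OF t, of L 0 "zz i"] d_L unfolding mar_def by simp
qed

definition Gsq :: "real \<Rightarrow> real" where
  "Gsq t = (\<Sum>jj<L. \<Sum>a<d (Suc jj). \<Sum>b<d jj. (gr t (Suc jj) a b)^2)"

lemma Gsq_nonneg: "Gsq t \<ge> 0" unfolding Gsq_def by (simp add: sum_nonneg)

lemma dR: "t \<ge> 0 \<Longrightarrow> ((\<lambda>s. Rk (W s)) has_real_derivative - Gsq t) (at t within {0..})"
proof -
  assume t: "t \<ge> 0"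
  define D where "D = (\<lambda>i. \<Sum>jj<L. \<Sum>a<d (Suc jj). \<Sum>b<d jj. qv L d (W t) (Suc jj) a * (- gr t (Suc jj) a b) * pvec d (W t) (zz i) jj b)"
  have "((\<lambda>s. (1 / real k) * (\<Sum>i<k. loss (mar (W s) i))) has_real_derivative
          (1 / real k) * (\<Sum>i<k. loss' (mar (W t) i) * D i)) (at t within {0..})"
  proof (intro DERIV_cmult DERIV_sum)
    fix i
    show "((\<lambda>s. loss (mar (W s) i)) has_real_derivative loss' (mar (W t) i) * D i) (at t within {0..})"
      using DERIV_chain2[OF loss_deriv[rule_format, of "mar (W t) i"] dmar[OF t, of i]] unfolding D_def .
  qed
  moreover have "(1 / real k) * (\<Sum>i<k. loss' (mar (W t) i) * D i) = - Gsq t"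
  proof -
    have "(1 / real k) * (\<Sum>i<k. loss' (mar (W t) i) * D i) =
      (1 / real k) * (\<Sum>jj<L. \<Sum>a<d (Suc jj). \<Sum>b<d jj. \<Sum>i<k. loss' (mar (W t) i) * (qv L d (W t) (Suc jj) a * (- gr t (Suc jj) a b) * pvec d (W t) (zz i) jj b))"
      unfolding D_def by (subst swap3) simp
    also have "\<dots> = (\<Sum>jj<L. \<Sum>a<d (Suc jj). \<Sum>b<d jj. (- gr t (Suc jj) a b) *
        ((1 / real k) * (\<Sum>i<k. loss' (mar (W t) i) * (qv L d (W t) (Suc jj) a * pvec d (W t) (zz i) jj b))))"
      by (simp add: sum_distrib_left algebra_simps)
    also have "\<dots> = (\<Sum>jj<L. \<Sum>a<d (Suc jj). \<Sum>b<d jj. (- gr t (Suc jj) a b) * gr t (Suc jj) a b)"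
      using gr_eq[OF t] by (intro sum.cong refl) simp
    also have "\<dots> = - Gsq t" unfolding Gsq_def by (simp add: power2_eq_square sum_negf)
    finally show ?thesis .
  qed
  ultimately have "((\<lambda>s. (1 / real k) * (\<Sum>i<k. loss (mar (W s) i))) has_real_derivative - Gsq t) (at t within {0..})"
    by simp
  thus ?thesis
    by (rule has_field_derivative_transform_within[where d=1]) (use t in \<open>auto simp: risk_eq[OF wdt]\<close>)
qed

lemma R_mono: "0 \<le> s \<Longrightarrow> s \<le> t \<Longrightarrow> Rk (W t) \<le> Rk (W s)"
  using flow_mono[of "\<lambda>s. Rk (W s)" "\<lambda>t. - Gsq t" s t] dR Gsq_nonneg by auto

end


lemma quad_expand:
  fixes f :: "nat \<Rightarrow> nat \<Rightarrow> real"
  shows "nsq m (\<lambda>c. \<Sum>a<r. f c a * x a) = (\<Sum>a<r. \<Sum>b<r. x a * x b * (\<Sum>c<m. f c a * f c b))"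
proof -
  have "nsq m (\<lambda>c. \<Sum>a<r. f c a * x a) = (\<Sum>c<m. \<Sum>a<r. \<Sum>b<r. x a * x b * (f c a * f c b))"
    unfolding nsq_def power2_eq_square by (simp add: sum_product algebra_simps)
  also have "\<dots> = (\<Sum>a<r. \<Sum>c<m. \<Sum>b<r. x a * x b * (f c a * f c b))" by (rule sum.swap)
  also have "\<dots> = (\<Sum>a<r. \<Sum>b<r. \<Sum>c<m. x a * x b * (f c a * f c b))"
    by (rule sum.cong[OF refl], rule sum.swap)
  also have "\<dots> = (\<Sum>a<r. \<Sum>b<r. x a * x b * (\<Sum>c<m. f c a * f c b))"
    by (simp add: sum_distrib_left)
  finally show ?thesis .
qed

lemma quad_bound:
  fixes D :: "nat \<Rightarrow> nat \<Rightarrow> real"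
  assumes "nsq r x \<le> 1"
  shows "\<bar>\<Sum>a<r. \<Sum>b<r. x a * x b * D a b\<bar> \<le> (\<Sum>a<r. \<Sum>b<r. \<bar>D a b\<bar>)"
proof -
  have xa: "\<bar>x a\<bar> \<le> 1" if "a < r" for a
  proof -
    have "(x a)^2 \<le> nsq r x" unfolding nsq_def using that by (intro member_le_sum) auto
    hence "(x a)^2 \<le> 1" using assms by simp
    thus ?thesis by (simp add: abs_square_le_1)
  qed
  have "\<bar>\<Sum>a<r. \<Sum>b<r. x a * x b * D a b\<bar> \<le> (\<Sum>a<r. \<Sum>b<r. \<bar>x a * x b * D a b\<bar>)"
    by (rule order_trans[OF sum_abs]) (intro sum_mono sum_abs)
  also have "\<dots> \<le> (\<Sum>a<r. \<Sum>b<r. \<bar>D a b\<bar>)"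
  proof (intro sum_mono)
    fix a b assume "a \<in> {..<r}" "b \<in> {..<r}"
    hence "\<bar>x a\<bar> * \<bar>x b\<bar> \<le> 1" using xa by (simp add: mult_le_one)
    thus "\<bar>x a * x b * D a b\<bar> \<le> \<bar>D a b\<bar>" by (simp add: abs_mult mult_left_le_one_le)
  qed
  finally show ?thesis .
qed

lemma sum_reorg:
  fixes \<kappa> :: real
  shows "(\<Sum>c\<in>C. (\<kappa> * (\<Sum>i\<in>I. l i * (Q c * P i))) * w c) = \<kappa> * (\<Sum>i\<in>I. l i * P i * (\<Sum>c\<in>C. w c * Q c))"
proof -
  have "(\<Sum>c\<in>C. (\<kappa> * (\<Sum>i\<in>I. l i * (Q c * P i))) * w c) = (\<Sum>c\<in>C. \<Sum>i\<in>I. \<kappa> * (l i * P i * (w c * Q c)))"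
    by (simp add: sum_distrib_left sum_distrib_right mult_ac)
  also have "\<dots> = (\<Sum>i\<in>I. \<Sum>c\<in>C. \<kappa> * (l i * P i * (w c * Q c)))" by (rule sum.swap)
  also have "\<dots> = \<kappa> * (\<Sum>i\<in>I. l i * P i * (\<Sum>c\<in>C. w c * Q c))"
    by (simp add: sum_distrib_left mult_ac)
  finally show ?thesis .
qed

lemma sum_reorg2:
  fixes \<kappa> :: real
  shows "(\<Sum>c\<in>C. (\<kappa> * (\<Sum>i\<in>I. l i * (A * P i c))) * w c) = \<kappa> * (\<Sum>i\<in>I. l i * A * (\<Sum>c\<in>C. w c * P i c))"
proof -
  have "(\<Sum>c\<in>C. (\<kappa> * (\<Sum>i\<in>I. l i * (A * P i c))) * w c) = (\<Sum>c\<in>C. \<Sum>i\<in>I. \<kappa> * (l i * A * (w c * P i c)))"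
    by (simp add: sum_distrib_left sum_distrib_right mult_ac)
  also have "\<dots> = (\<Sum>i\<in>I. \<Sum>c\<in>C. \<kappa> * (l i * A * (w c * P i c)))" by (rule sum.swap)
  also have "\<dots> = \<kappa> * (\<Sum>i\<in>I. l i * A * (\<Sum>c\<in>C. w c * P i c))"
    by (simp add: sum_distrib_left mult_ac)
  finally show ?thesis .
qed

context mp begin

definition Dm :: "real \<Rightarrow> nat \<Rightarrow> nat \<Rightarrow> nat \<Rightarrow> real" where
  "Dm t jj a b = (\<Sum>c<d (Suc (Suc jj)). W t (Suc (Suc jj)) $$ (c,a) * W t (Suc (Suc jj)) $$ (c,b))
              - (\<Sum>c<d jj. W t (Suc jj) $$ (a,c) * W t (Suc jj) $$ (b,c))"

definition Hm :: "real \<Rightarrow> nat \<Rightarrow> nat \<Rightarrow> nat \<Rightarrow> real" where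
  "Hm t jj a b = (1 / real k) * (\<Sum>i<k. loss' (mar (W t) i) * pvec d (W t) (zz i) (Suc jj) a * qv L d (W t) (Suc jj) b)"

lemma sumA:
  assumes t: "t \<ge> 0" and jj: "Suc (Suc jj) \<le> L" and a: "a < d (Suc jj)" and b: "b < d (Suc jj)"
  shows "(\<Sum>c<d (Suc (Suc jj)). gr t (Suc (Suc jj)) c a * W t (Suc (Suc jj)) $$ (c,b)) = Hm t jj a b"
proof -
  have "(\<Sum>c<d (Suc (Suc jj)). gr t (Suc (Suc jj)) c a * W t (Suc (Suc jj)) $$ (c,b)) =
        (\<Sum>c<d (Suc (Suc jj)). (1 / real k) * (\<Sum>i<k. loss' (mar (W t) i) * (qv L d (W t) (Suc (Suc jj)) c * pvec d (W t) (zz i) (Suc jj) a)) * W t (Suc (Suc jj)) $$ (c,b))"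
    using gr_eq[OF t jj _ a] by (intro sum.cong refl) simp
  also have "\<dots> = (1 / real k) * (\<Sum>i<k. loss' (mar (W t) i) * pvec d (W t) (zz i) (Suc jj) a *
                    (\<Sum>c<d (Suc (Suc jj)). W t (Suc (Suc jj)) $$ (c,b) * qv L d (W t) (Suc (Suc jj)) c))"
    by (rule sum_reorg)
  also have "\<dots> = Hm t jj a b"
    unfolding Hm_def using qv_step[of "Suc jj" L d "W t"] jj by simp
  finally show ?thesis .
qed

lemma sumB:
  assumes t: "t \<ge> 0" and jj: "Suc (Suc jj) \<le> L" and a: "a < d (Suc jj)" and b: "b < d (Suc jj)"
  shows "(\<Sum>c<d jj. gr t (Suc jj) a c * W t (Suc jj) $$ (b,c)) = Hm t jj b a"
proof -
  have jj': "Suc jj \<le> L" using jj by simp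
  have "(\<Sum>c<d jj. gr t (Suc jj) a c * W t (Suc jj) $$ (b,c)) =
        (\<Sum>c<d jj. (1 / real k) * (\<Sum>i<k. loss' (mar (W t) i) * (qv L d (W t) (Suc jj) a * pvec d (W t) (zz i) jj c)) * W t (Suc jj) $$ (b,c))"
    using gr_eq[OF t jj' a] by (intro sum.cong refl) simp
  also have "\<dots> = (1 / real k) * (\<Sum>i<k. loss' (mar (W t) i) * qv L d (W t) (Suc jj) a *
                    (\<Sum>c<d jj. W t (Suc jj) $$ (b,c) * pvec d (W t) (zz i) jj c))"
    by (rule sum_reorg2)
  also have "\<dots> = Hm t jj b a"
    unfolding Hm_def by (simp add: algebra_simps)
  finally show ?thesis .
qed

lemma dDm:
  assumes t: "t \<ge> 0" and jj: "Suc (Suc jj) \<le> L" and a: "a < d (Suc jj)" and b: "b < d (Suc jj)"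
  shows "((\<lambda>s. Dm s jj a b) has_real_derivative 0) (at t within {0..})"
proof -
  have jj': "Suc jj \<le> L" using jj by simp
  have d1: "((\<lambda>s. \<Sum>c<d (Suc (Suc jj)). W s (Suc (Suc jj)) $$ (c,a) * W s (Suc (Suc jj)) $$ (c,b)) has_real_derivative
        (\<Sum>c<d (Suc (Suc jj)). - (gr t (Suc (Suc jj)) c a * W t (Suc (Suc jj)) $$ (c,b)) - gr t (Suc (Suc jj)) c b * W t (Suc (Suc jj)) $$ (c,a))) (at t within {0..})"
  proof (rule DERIV_sum)
    fix c assume c: "c \<in> {..<d (Suc (Suc jj))}"
    have "((\<lambda>s. W s (Suc (Suc jj)) $$ (c,a) * W s (Suc (Suc jj)) $$ (c,b)) has_real_derivative
       (- gr t (Suc (Suc jj)) c a) * W t (Suc (Suc jj)) $$ (c,b) + (- gr t (Suc (Suc jj)) c b) * W t (Suc (Suc jj)) $$ (c,a)) (at t within {0..})"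
      by (rule DERIV_mult) (use dw[OF t jj] c a b in auto)
    thus "((\<lambda>s. W s (Suc (Suc jj)) $$ (c,a) * W s (Suc (Suc jj)) $$ (c,b)) has_real_derivative
       - (gr t (Suc (Suc jj)) c a * W t (Suc (Suc jj)) $$ (c,b)) - gr t (Suc (Suc jj)) c b * W t (Suc (Suc jj)) $$ (c,a)) (at t within {0..})"
      by simp
  qed
  have d2: "((\<lambda>s. \<Sum>c<d jj. W s (Suc jj) $$ (a,c) * W s (Suc jj) $$ (b,c)) has_real_derivative
        (\<Sum>c<d jj. - (gr t (Suc jj) a c * W t (Suc jj) $$ (b,c)) - gr t (Suc jj) b c * W t (Suc jj) $$ (a,c))) (at t within {0..})"
  proof (rule DERIV_sum)
    fix c assume c: "c \<in> {..<d jj}"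
    have "((\<lambda>s. W s (Suc jj) $$ (a,c) * W s (Suc jj) $$ (b,c)) has_real_derivative
       (- gr t (Suc jj) a c) * W t (Suc jj) $$ (b,c) + (- gr t (Suc jj) b c) * W t (Suc jj) $$ (a,c)) (at t within {0..})"
      by (rule DERIV_mult) (use dw[OF t jj'] c a b in auto)
    thus "((\<lambda>s. W s (Suc jj) $$ (a,c) * W s (Suc jj) $$ (b,c)) has_real_derivative
       - (gr t (Suc jj) a c * W t (Suc jj) $$ (b,c)) - gr t (Suc jj) b c * W t (Suc jj) $$ (a,c)) (at t within {0..})"
      by simp
  qed
  have e1: "(\<Sum>c<d (Suc (Suc jj)). - (gr t (Suc (Suc jj)) c a * W t (Suc (Suc jj)) $$ (c,b)) - gr t (Suc (Suc jj)) c b * W t (Suc (Suc jj)) $$ (c,a))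
      = - Hm t jj a b - Hm t jj b a"
    using sumA[OF t jj a b] sumA[OF t jj b a] by (simp add: sum_subtractf sum_negf)
  have e2: "(\<Sum>c<d jj. - (gr t (Suc jj) a c * W t (Suc jj) $$ (b,c)) - gr t (Suc jj) b c * W t (Suc jj) $$ (a,c))
      = - Hm t jj b a - Hm t jj a b"
    using sumB[OF t jj a b] sumB[OF t jj b a] by (simp add: sum_subtractf sum_negf)
  have "((\<lambda>s. Dm s jj a b) has_real_derivative ((- Hm t jj a b - Hm t jj b a) - (- Hm t jj b a - Hm t jj a b))) (at t within {0..})"
    unfolding Dm_def using DERIV_diff[OF d1 d2] unfolding e1 e2 .
  thus ?thesis by simp
qed

lemma Dm_const:
  assumes t: "t \<ge> 0" and jj: "Suc (Suc jj) \<le> L" and a: "a < d (Suc jj)" and b: "b < d (Suc jj)"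
  shows "Dm t jj a b = Dm 0 jj a b"
  using flow_const[of "\<lambda>s. Dm s jj a b" t] dDm[OF _ jj a b] t by auto

definition F2 :: "real \<Rightarrow> nat \<Rightarrow> real" where
  "F2 t j = fro (d j) (d (j - 1)) (\<lambda>a b. W t j $$ (a,b))"

lemma F2_nonneg: "F2 t j \<ge> 0" unfolding F2_def by (rule fro_nonneg)

lemma trace_Dm: "(\<Sum>a<d (Suc jj). Dm t jj a a) = F2 t (Suc (Suc jj)) - F2 t (Suc jj)"
proof -
  have "(\<Sum>a<d (Suc jj). \<Sum>c<d (Suc (Suc jj)). W t (Suc (Suc jj)) $$ (c,a) * W t (Suc (Suc jj)) $$ (c,a))
      = (\<Sum>c<d (Suc (Suc jj)). \<Sum>a<d (Suc jj). W t (Suc (Suc jj)) $$ (c,a) * W t (Suc (Suc jj)) $$ (c,a))"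
    by (rule sum.swap)
  thus ?thesis unfolding Dm_def F2_def fro_def by (simp add: sum_subtractf power2_eq_square)
qed

lemma F2_diff_const:
  assumes t: "t \<ge> 0" and jj: "Suc (Suc jj) \<le> L"
  shows "F2 t (Suc (Suc jj)) - F2 t (Suc jj) = F2 0 (Suc (Suc jj)) - F2 0 (Suc jj)"
  using trace_Dm[where jj=jj and t=t] trace_Dm[where jj=jj and t=0] Dm_const[OF t jj] by simp

lemma quadform:
  assumes t: "t \<ge> 0" and jj: "Suc (Suc jj) \<le> L"
  shows "nsq (d jj) (\<lambda>c. \<Sum>a<d (Suc jj). W t (Suc jj) $$ (a,c) * x a) =
         nsq (d (Suc (Suc jj))) (\<lambda>c. \<Sum>a<d (Suc jj). W t (Suc (Suc jj)) $$ (c,a) * x a)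
         - (\<Sum>a<d (Suc jj). \<Sum>b<d (Suc jj). x a * x b * Dm 0 jj a b)"
proof -
  have "(\<Sum>a<d (Suc jj). \<Sum>b<d (Suc jj). x a * x b * Dm 0 jj a b) = (\<Sum>a<d (Suc jj). \<Sum>b<d (Suc jj). x a * x b * Dm t jj a b)"
    using Dm_const[OF t jj] by (intro sum.cong refl) simp
  also have "\<dots> = nsq (d (Suc (Suc jj))) (\<lambda>c. \<Sum>a<d (Suc jj). W t (Suc (Suc jj)) $$ (c,a) * x a)
      - nsq (d jj) (\<lambda>c. \<Sum>a<d (Suc jj). W t (Suc jj) $$ (a,c) * x a)"
    unfolding quad_expand Dm_def by (simp add: right_diff_distrib sum_subtractf)
  finally show ?thesis by simp
qed

end


lemma flow_mvt_open:
  fixes f f' :: "real \<Rightarrow> real"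
  assumes der: "\<forall>t\<ge>0. (f has_real_derivative f' t) (at t within {0..})"
    and a: "0 \<le> a" and ab: "a < b"
  shows "\<exists>z. a < z \<and> z < b \<and> f b - f a = (b - a) * f' z"
proof -
  have "continuous (at t within {0..}) f" if "t \<ge> 0" for t
    using der that DERIV_continuous by blast
  hence "continuous_on {0..} f" by (simp add: continuous_on_eq_continuous_within)
  hence cont: "continuous_on {a..b} f" by (rule continuous_on_subset) (use a in auto)
  have dat: "DERIV f x :> f' x" if "0 < x" for x
  proof -
    have "x \<in> interior {0::real..}" using that by simp
    hence "at x within {0..} = at x" by (rule at_within_interior)
    moreover have "(f has_real_derivative f' x) (at x within {0..})" using der that by simp
    ultimately show ?thesis by simp
  qed
  have "f differentiable (at x)" if "a < x" "x < b" for x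
    using dat[of x] that a unfolding real_differentiable_def by auto
  then obtain l z where z: "a < z" "z < b" "DERIV f z :> l" "f b - f a = (b - a) * l"
    using MVT[OF ab cont] by blast
  have "l = f' z" using DERIV_unique[OF z(3) dat] z a by simp
  thus ?thesis using z by (intro exI[of _ z]) auto
qed

lemma flow_cont:
  fixes f f' :: "real \<Rightarrow> real"
  assumes der: "\<forall>t\<ge>0. (f has_real_derivative f' t) (at t within {0..})"
  shows "continuous_on {0..} f"
proof -
  have "continuous (at t within {0..}) f" if "t \<ge> 0" for t
    using der that DERIV_continuous by blast
  thus ?thesis by (simp add: continuous_on_eq_continuous_within)
qed

lemma diverge:
  fixes N R N' R' :: "real \<Rightarrow> real"
  assumes dN: "\<forall>t\<ge>0. (N has_real_derivative N' t) (at t within {0..})"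
    and dR: "\<forall>t\<ge>0. (R has_real_derivative R' t) (at t within {0..})"
    and Rlow: "\<forall>t\<ge>0. R t \<ge> 0"
    and Rneg: "\<forall>t\<ge>0. R' t \<le> 0"
    and bnd: "\<And>B. \<exists>c>0. \<exists>K>0. \<forall>t\<ge>0. N t \<le> B \<longrightarrow> R' t \<le> - c \<and> \<bar>N' t\<bar> \<le> K"
  shows "filterlim N at_top at_top"
proof (rule ccontr)
  assume "\<not> filterlim N at_top at_top"
  then obtain B where nev: "\<not> eventually (\<lambda>x. B \<le> N x) at_top"
    unfolding filterlim_at_top by blast
  have often: "\<exists>t\<ge>T. N t \<le> B" for T
  proof (rule ccontr)
    assume "\<not> (\<exists>t\<ge>T. N t \<le> B)"
    hence "\<forall>t\<ge>T. B \<le> N t" by auto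
    hence "eventually (\<lambda>x. B \<le> N x) at_top" unfolding eventually_at_top_linorder by blast
    thus False using nev by simp
  qed
  obtain c K where c: "c > 0" and K: "K > 0" and cK: "\<forall>t\<ge>0. N t \<le> B + 1 \<longrightarrow> R' t \<le> - c \<and> \<bar>N' t\<bar> \<le> K"
    using bnd[of "B + 1"] by blast
  define h where "h = 1 / (2 * K)"
  have h: "h > 0" "h * K = 1/2" unfolding h_def using K by auto
  have contN: "continuous_on {0..} N" using flow_cont[OF dN] .
  have stay: "N s \<le> B + 1" if t0: "t0 \<ge> 0" "N t0 \<le> B" and s: "t0 \<le> s" "s \<le> t0 + h" for t0 s
  proof (rule ccontr)
    assume "\<not> N s \<le> B + 1"
    hence Ns: "N s > B + 1" by simp
    define S where "S = {t0..s} \<inter> N -` {B+1..}"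
    have "closed S" unfolding S_def
    proof (rule continuous_closed_preimage)
      show "continuous_on {t0..s} N" by (rule continuous_on_subset[OF contN]) (use t0 in auto)
    qed auto
    moreover have "S \<noteq> {}" using Ns s unfolding S_def by auto
    moreover have "bdd_below S" unfolding S_def by (auto intro: bdd_belowI[of _ t0])
    ultimately have inS: "Inf S \<in> S" by (rule closed_contains_Inf[rotated 2])
    define s' where "s' = Inf S"
    have s'1: "t0 \<le> s'" "s' \<le> s" "N s' \<ge> B + 1" using inS unfolding s'_def S_def by auto
    have s'2: "t0 < s'" using s'1 t0 by (metis add_le_same_cancel1 less_eq_real_def not_one_le_zero order_trans)
    have below: "N x < B + 1" if "t0 \<le> x" "x < s'" for x
    proof (rule ccontr)
      assume "\<not> N x < B + 1"
      hence "x \<in> S" unfolding S_def using that s'1 by auto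
      hence "s' \<le> x" unfolding s'_def using \<open>bdd_below S\<close> by (rule cInf_lower)
      thus False using that by simp
    qed
    obtain z where z: "t0 < z" "z < s'" "N s' - N t0 = (s' - t0) * N' z"
      using flow_mvt_open[OF dN t0(1) s'2] by blast
    have "\<bar>N' z\<bar> \<le> K" using cK below[of z] z t0 by auto
    hence "N s' - N t0 \<le> (s' - t0) * K" using z s'2 by (metis abs_le_D1 mult_left_mono diff_ge_0_iff_ge less_eq_real_def)
    also have "\<dots> \<le> h * K" using s'1 s K by (intro mult_right_mono) auto
    finally show False using h s'1 t0 by simp
  qed
  have drop: "R (t0 + h) \<le> R t0 - c * h" if t0: "t0 \<ge> 0" "N t0 \<le> B" for t0
  proof -
    obtain z where z: "t0 < z" "z < t0 + h" "R (t0 + h) - R t0 = (t0 + h - t0) * R' z"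
      using flow_mvt_open[OF dR t0(1), of "t0 + h"] h by auto
    have "R' z \<le> - c" using cK stay[OF t0, of z] z t0 by auto
    hence "h * R' z \<le> h * (- c)" using h by (intro mult_left_mono) auto
    thus ?thesis using z by (simp add: algebra_simps)
  qed
  have Rmono: "R b \<le> R a" if ab: "0 \<le> a" "a \<le> b" for a b
  proof -
    obtain z where "a \<le> z" "z \<le> b" "R b - R a = (b - a) * R' z"
      using flow_mvt[OF dR ab] by blast
    moreover have "(b - a) * R' z \<le> 0" using Rneg ab \<open>a \<le> z\<close> by (simp add: mult_nonneg_nonpos)
    ultimately show ?thesis by simp
  qed
  have many: "\<exists>t\<ge>0. R t \<le> R 0 - real m * (c * h)" for m
  proof (induction m)
    case 0 thus ?case by (intro exI[of _ 0]) simp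
  next
    case (Suc m)
    then obtain t where t: "t \<ge> 0" "R t \<le> R 0 - real m * (c * h)" by blast
    obtain t' where t': "t' \<ge> t" "N t' \<le> B" using often by blast
    have "R (t' + h) \<le> R t' - c * h" using drop t' t by auto
    also have "R t' \<le> R t" using Rmono t t' by auto
    finally have "R (t' + h) \<le> R 0 - real (Suc m) * (c * h)" using t by (simp add: algebra_simps)
    thus ?case using t t' h by (intro exI[of _ "t' + h"]) auto
  qed
  obtain m :: nat where m: "real m > R 0 / (c * h)" using reals_Archimedean2 by blast
  then obtain t where t: "t \<ge> 0" "R t \<le> R 0 - real m * (c * h)" using many by blast
  have "real m * (c * h) > R 0" using m c h by (simp add: field_simps)
  thus False using t Rlow by force
qed


context mp begin

lemma k_pos: "k > 0"
proof (rule ccontr)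
  assume "\<not> k > 0"
  hence "k = 0" by simp
  thus False using init unfolding risk_def by simp
qed

lemma zero_wd: "weights_dims L d (zero_weights d)"
  unfolding weights_dims_def zero_weights_def by auto

lemma mar_zero: "mar (zero_weights d) i = 0"
proof -
  obtain L0 where L0: "L = Suc L0" using L_pos by (cases L) auto
  have "pvec d (zero_weights d) (zz i) (Suc L0) 0 = 0"
    using d_L L0 dims_pos by (auto simp: zero_weights_def intro!: sum.neutral)
  thus ?thesis unfolding mar_def using L0 by simp
qed

lemma risk_zero: "Rk (zero_weights d) = loss 0"
  using risk_eq[OF zero_wd] k_pos by (simp add: mar_zero)

definition R0 :: real where "R0 = Rk (W 0)"

lemma R0_lt: "R0 < loss 0" using init risk_zero unfolding R0_def by simp

lemma R_le: "t \<ge> 0 \<Longrightarrow> Rk (W t) \<le> R0"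
  unfolding R0_def using R_mono[of 0 t] by simp

lemma R_nonneg: "t \<ge> 0 \<Longrightarrow> Rk (W t) \<ge> 0"
proof -
  assume t: "t \<ge> 0"
  have "(\<Sum>i<k. loss (mar (W t) i)) \<ge> 0" by (intro sum_nonneg) (use loss_pos in \<open>auto intro: less_imp_le\<close>)
  thus ?thesis using risk_eq[OF wdt[OF t]] k_pos by simp
qed

lemma loss_decr: "(x1::real) < x2 \<Longrightarrow> loss x2 < loss x1"
  by (rule DERIV_neg_imp_decreasing) (use loss_deriv loss'_neg in auto)

lemma delta_ex: "\<exists>\<delta>>0. loss \<delta> > R0"
proof -
  have "isCont loss 0" using loss_deriv DERIV_isCont by blast
  hence "loss \<midarrow>0\<rightarrow> loss 0" by (simp add: isCont_def)
  then obtain s where s: "s > 0" "\<And>x. x \<noteq> 0 \<Longrightarrow> norm (x - 0) < s \<Longrightarrow> norm (loss x - loss 0) < loss 0 - R0"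
    using R0_lt unfolding LIM_eq by (metis diff_gt_0_iff_gt)
  have "norm (loss (s/2) - loss 0) < loss 0 - R0" using s(1) by (intro s(2)) auto
  thus ?thesis using s(1) by (intro exI[of _ "s/2"]) auto
qed

definition delta :: real where "delta = (SOME \<delta>. \<delta> > 0 \<and> loss \<delta> > R0)"

lemma delta: "delta > 0" "loss delta > R0"
  using someI_ex[OF delta_ex] unfolding delta_def by auto

lemma big_margin: "t \<ge> 0 \<Longrightarrow> \<exists>i<k. mar (W t) i > delta"
proof (rule ccontr)
  assume t: "t \<ge> 0" and "\<not> (\<exists>i<k. mar (W t) i > delta)"
  hence "\<forall>i<k. loss (mar (W t) i) \<ge> loss delta" using loss_decr by (metis less_eq_real_def not_less)
  hence "(\<Sum>i<k. loss (mar (W t) i)) \<ge> (\<Sum>i<k. loss delta)" by (intro sum_mono) auto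
  hence "(\<Sum>i<k. loss (mar (W t) i)) \<ge> real k * loss delta" by simp
  hence "real k * loss delta \<le> real k * Rk (W t)" using risk_eq[OF wdt[OF t]] k_pos by simp
  hence "Rk (W t) \<ge> loss delta" using k_pos by simp
  thus False using R_le[OF t] delta by simp
qed

definition cst :: "nat \<Rightarrow> real" where "cst j = F2 0 j - F2 0 L"

lemma F2_rel: "t \<ge> 0 \<Longrightarrow> 1 \<le> j \<Longrightarrow> j \<le> L \<Longrightarrow> F2 t j = F2 t L + cst j"
proof -
  assume t: "t \<ge> 0"
  have "\<forall>j. L - j = m \<longrightarrow> 1 \<le> j \<longrightarrow> j \<le> L \<longrightarrow> F2 t j = F2 t L + cst j" for m
  proof (induction m)
    case 0 thus ?case unfolding cst_def by auto
  next
    case (Suc m)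
    show ?case
    proof (intro allI impI)
      fix j assume a: "L - j = Suc m" "1 \<le> j" "j \<le> L"
      obtain jj where jj: "j = Suc jj" using a by (cases j) auto
      have jjL: "Suc (Suc jj) \<le> L" using a jj by simp
      have "F2 t (Suc j) = F2 t L + cst (Suc j)" using Suc.IH a by auto
      moreover have "F2 t (Suc (Suc jj)) - F2 t (Suc jj) = F2 0 (Suc (Suc jj)) - F2 0 (Suc jj)"
        by (rule F2_diff_const[OF t jjL])
      ultimately show "F2 t j = F2 t L + cst j" unfolding cst_def jj by simp
    qed
  qed
  thus "1 \<le> j \<Longrightarrow> j \<le> L \<Longrightarrow> F2 t j = F2 t L + cst j" by blast
qed

end


context mp begin

lemma qv_bound:
  assumes t: "t \<ge> 0"
  shows "j \<le> L \<Longrightarrow> nsq (d j) (qv L d (W t) j) \<le> (\<Prod>i\<in>{Suc j..L}. F2 t i)"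
proof -
  have "\<forall>j. L - j = m \<longrightarrow> j \<le> L \<longrightarrow> nsq (d j) (qv L d (W t) j) \<le> (\<Prod>i\<in>{Suc j..L}. F2 t i)" for m
  proof (induction m)
    case 0
    show ?case
    proof (intro allI impI)
      fix j assume "L - j = 0" "j \<le> L"
      hence j: "j = L" by simp
      show "nsq (d j) (qv L d (W t) j) \<le> (\<Prod>i\<in>{Suc j..L}. F2 t i)"
        unfolding j using d_L by (simp add: qv_L nsq_def)
    qed
  next
    case (Suc m)
    show ?case
    proof (intro allI impI)
      fix j assume a: "L - j = Suc m" "j \<le> L"
      hence jL: "j < L" by simp
      have IH: "nsq (d (Suc j)) (qv L d (W t) (Suc j)) \<le> (\<Prod>i\<in>{Suc (Suc j)..L}. F2 t i)"
        using Suc.IH a by auto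
      have "nsq (d j) (qv L d (W t) j) \<le> F2 t (Suc j) * nsq (d (Suc j)) (qv L d (W t) (Suc j))"
        unfolding qv_step[OF jL] F2_def using appT_bound[where c="d j" and r="d (Suc j)" and w="\<lambda>a b. W t (Suc j) $$ (a,b)" and y="qv L d (W t) (Suc j)"]
        by (simp add: fro_def)
      also have "\<dots> \<le> F2 t (Suc j) * (\<Prod>i\<in>{Suc (Suc j)..L}. F2 t i)"
        using IH F2_nonneg by (intro mult_left_mono) auto
      also have "\<dots> = (\<Prod>i\<in>{Suc j..L}. F2 t i)"
        using jL by (simp add: prod.atLeast_Suc_atMost)
      finally show "nsq (d j) (qv L d (W t) j) \<le> (\<Prod>i\<in>{Suc j..L}. F2 t i)" .
    qed
  qed
  thus "j \<le> L \<Longrightarrow> ?thesis" by blast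
qed

lemma mar_sq0: "(mar (W t) i)^2 \<le> nsq (d 0) (qv L d (W t) 0) * nsq (d 0) (zz i)"
proof -
  have "mar (W t) i = (\<Sum>a<d 0. qv L d (W t) 0 a * zz i a)"
    unfolding mar_def using split_ident[where d=d and L=L, OF d_L, of 0 "W t" "zz i"] by simp
  thus ?thesis using CS_sum by simp
qed

lemma mar_sq1: "(mar (W t) i)^2 \<le> nsq (d 1) (qv L d (W t) 1) * (F2 t 1 * nsq (d 0) (zz i))"
proof -
  have "mar (W t) i = (\<Sum>a<d 1. qv L d (W t) 1 a * pvec d (W t) (zz i) 1 a)"
    unfolding mar_def using split_ident[where d=d and L=L, OF d_L, of 1 "W t" "zz i"] L_pos by simp
  hence "(mar (W t) i)^2 \<le> nsq (d 1) (qv L d (W t) 1) * nsq (d 1) (pvec d (W t) (zz i) 1)"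
    using CS_sum by simp
  moreover have "nsq (d 1) (pvec d (W t) (zz i) 1) \<le> F2 t 1 * nsq (d 0) (zz i)"
    using app_bound[where r="d 1" and c="d 0" and w="\<lambda>a b. W t 1 $$ (a,b)" and x="zz i"] unfolding F2_def fro_def by simp
  ultimately show ?thesis using nsq_nonneg[of "d 1"]
    by (meson mult_left_mono order_trans)
qed

definition hv :: "real \<Rightarrow> nat \<Rightarrow> real" where
  "hv t b = (1 / real k) * (\<Sum>i<k. loss' (mar (W t) i) * zz i b)"

lemma Gsq_lower: "t \<ge> 0 \<Longrightarrow> Gsq t \<ge> nsq (d 1) (qv L d (W t) 1) * nsq (d 0) (hv t)"
proof -
  assume t: "t \<ge> 0"
  have "(\<Sum>a<d (Suc 0). \<Sum>b<d 0. (gr t (Suc 0) a b)^2) \<le> Gsq t"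
    unfolding Gsq_def using L_pos
    by (intro member_le_sum[where f="\<lambda>jj. \<Sum>a<d (Suc jj). \<Sum>b<d jj. (gr t (Suc jj) a b)^2"])
       (auto intro!: sum_nonneg)
  moreover have "(\<Sum>a<d (Suc 0). \<Sum>b<d 0. (gr t (Suc 0) a b)^2) =
                 (\<Sum>a<d (Suc 0). \<Sum>b<d 0. (qv L d (W t) 1 a * hv t b)^2)"
  proof (intro sum.cong refl)
    fix a b assume a: "a \<in> {..<d (Suc 0)}" and b: "b \<in> {..<d 0}"
    have "gr t (Suc 0) a b = (1 / real k) * (\<Sum>i<k. loss' (mar (W t) i) * (qv L d (W t) (Suc 0) a * zz i b))"
      using gr_eq[OF t, of 0 a b] L_pos a b by simp
    also have "\<dots> = qv L d (W t) 1 a * hv t b"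
      unfolding hv_def by (simp add: sum_distrib_left algebra_simps)
    finally show "(gr t (Suc 0) a b)^2 = (qv L d (W t) 1 a * hv t b)^2" by simp
  qed
  moreover have "(\<Sum>a<d (Suc 0). \<Sum>b<d 0. (qv L d (W t) 1 a * hv t b)^2) = nsq (d 1) (qv L d (W t) 1) * nsq (d 0) (hv t)"
    unfolding nsq_def sum_product by (simp add: power_mult_distrib)
  ultimately show ?thesis by simp
qed

lemma separator: "\<exists>ub. (\<forall>i<k. (\<Sum>b<d 0. zz i b * ub b) > 0)"
proof -
  obtain ub where ub: "ub \<in> carrier_vec (d 0)" "\<forall>i<k. y i * (ub \<bullet> agg_feat L (n i) (G i) (X i)) > 0"
    using separable by blast
  have "(\<Sum>b<d 0. zz i b * ub $ b) = y i * (ub \<bullet> agg_feat L (n i) (G i) (X i))" if i: "i < k" for i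
  proof -
    have Xi: "X i \<in> carrier_mat (d 0) (n i)" using feats i by auto
    have ag: "agg_feat L (n i) (G i) (X i) \<in> carrier_vec (d 0)" by (rule agg_carrier[OF Xi])
    have "(\<Sum>b<d 0. zz i b * ub $ b) = (\<Sum>b<d 0. y i * (ub $ b * agg_feat L (n i) (G i) (X i) $ b))"
      unfolding zz_def zv_def agg_smult[OF Xi] using ag by (intro sum.cong refl) auto
    also have "\<dots> = y i * (ub \<bullet> agg_feat L (n i) (G i) (X i))"
      using sp_sum[OF ag] by (simp add: sum_distrib_left)
    finally show ?thesis .
  qed
  thus ?thesis using ub by (intro exI[of _ "\<lambda>b. ub $ b"]) auto
qed

lemma dN: "t \<ge> 0 \<Longrightarrow> ((\<lambda>s. F2 s L) has_real_derivative
   - (2 / real k) * (\<Sum>i<k. loss' (mar (W t) i) * mar (W t) i)) (at t within {0..})"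
proof -
  assume t: "t \<ge> 0"
  obtain L0 where L0: "L = Suc L0" using L_pos by (cases L) auto
  have "F2 s L = (\<Sum>b<d L0. (W s L $$ (0,b))^2)" for s
    unfolding F2_def fro_def using d_L L0 by simp
  hence eqF: "(\<lambda>s. F2 s L) = (\<lambda>s. \<Sum>b<d L0. W s (Suc L0) $$ (0,b) * W s (Suc L0) $$ (0,b))"
    using L0 by (simp add: power2_eq_square)
  have "((\<lambda>s. \<Sum>b<d L0. W s (Suc L0) $$ (0,b) * W s (Suc L0) $$ (0,b)) has_real_derivative
        (\<Sum>b<d L0. - 2 * (W t (Suc L0) $$ (0,b) * gr t (Suc L0) 0 b))) (at t within {0..})"
  proof (rule DERIV_sum)
    fix b assume b: "b \<in> {..<d L0}"
    have dd: "((\<lambda>s. W s (Suc L0) $$ (0,b)) has_real_derivative - gr t (Suc L0) 0 b) (at t within {0..})"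
      using dw[OF t, of L0 0 b] L0 d_L b by auto
    show "((\<lambda>s. W s (Suc L0) $$ (0,b) * W s (Suc L0) $$ (0,b)) has_real_derivative
        - 2 * (W t (Suc L0) $$ (0,b) * gr t (Suc L0) 0 b)) (at t within {0..})"
      using DERIV_mult[OF dd dd] by (simp add: algebra_simps)
  qed
  moreover have "(\<Sum>b<d L0. - 2 * (W t (Suc L0) $$ (0,b) * gr t (Suc L0) 0 b)) =
       - (2 / real k) * (\<Sum>i<k. loss' (mar (W t) i) * mar (W t) i)"
  proof -
    have g: "gr t (Suc L0) 0 b = (1 / real k) * (\<Sum>i<k. loss' (mar (W t) i) * pvec d (W t) (zz i) L0 b)"
      if "b < d L0" for b
      using gr_eq[OF t, of L0 0 b] L0 d_L that by (simp add: qv_L)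
    have "(\<Sum>b<d L0. - 2 * (W t (Suc L0) $$ (0,b) * gr t (Suc L0) 0 b)) =
          - (2 / real k) * (\<Sum>b<d L0. \<Sum>i<k. loss' (mar (W t) i) * (W t (Suc L0) $$ (0,b) * pvec d (W t) (zz i) L0 b))"
      using g by (simp add: sum_distrib_left algebra_simps)
    also have "\<dots> = - (2 / real k) * (\<Sum>i<k. loss' (mar (W t) i) * (\<Sum>b<d L0. W t (Suc L0) $$ (0,b) * pvec d (W t) (zz i) L0 b))"
      by (simp add: sum.swap[of _ "{..<d L0}"] sum_distrib_left)
    also have "\<dots> = - (2 / real k) * (\<Sum>i<k. loss' (mar (W t) i) * mar (W t) i)"
    proof -
      have "mar (W t) i = (\<Sum>b<d L0. W t (Suc L0) $$ (0,b) * pvec d (W t) (zz i) L0 b)" for i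
        unfolding mar_def using L0 by simp
      thus ?thesis by simp
    qed
    finally show ?thesis .
  qed
  ultimately show ?thesis unfolding eqF by simp
qed

end


context mp begin

definition Nd :: "real \<Rightarrow> real" where
  "Nd t = - (2 / real k) * (\<Sum>i<k. loss' (mar (W t) i) * mar (W t) i)"

lemma bnd: "\<exists>c>0. \<exists>K>0. \<forall>t\<ge>0. F2 t L \<le> B \<longrightarrow> - Gsq t \<le> - c \<and> \<bar>Nd t\<bar> \<le> K"
proof -
  obtain ub where ub: "\<forall>i<k. (\<Sum>b<d 0. zz i b * ub b) > 0" using separator by blast
  define \<gamma> where "\<gamma> i = (\<Sum>b<d 0. zz i b * ub b)" for i
  define CC where "CC = (\<Sum>j\<in>{1..L}. \<bar>cst j\<bar>)"
  define BB where "BB = \<bar>B\<bar> + CC"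
  define Z2 where "Z2 = (\<Sum>i<k. nsq (d 0) (zz i))"
  define Mb where "Mb = sqrt (BB^L * Z2) + 1"
  have CC0: "CC \<ge> 0" unfolding CC_def by (simp add: sum_nonneg)
  have BB0: "BB \<ge> 0" unfolding BB_def using CC0 by simp
  have Z20: "Z2 \<ge> 0" unfolding Z2_def by (simp add: sum_nonneg nsq_nonneg)
  have Mb0: "Mb > 0" unfolding Mb_def using BB0 Z20 by (simp add: add_nonneg_pos)
  have Z2i: "nsq (d 0) (zz i) \<le> Z2" if "i < k" for i
    unfolding Z2_def using that by (intro member_le_sum) (auto simp: nsq_nonneg)
  have Fj: "F2 t j \<le> BB" if t: "t \<ge> 0" "F2 t L \<le> B" and j: "1 \<le> j" "j \<le> L" for t j
  proof -
    have "\<bar>cst j\<bar> \<le> CC" unfolding CC_def using j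
      by (intro member_le_sum[where f="\<lambda>j. \<bar>cst j\<bar>"]) auto
    hence "cst j \<le> CC" by simp
    thus ?thesis using F2_rel[OF t(1) j] t unfolding BB_def by simp
  qed
  have Mbd: "\<bar>mar (W t) i\<bar> \<le> Mb" if t: "t \<ge> 0" "F2 t L \<le> B" and i: "i < k" for t i
  proof -
    have "(\<Prod>j\<in>{Suc 0..L}. F2 t j) \<le> (\<Prod>j\<in>{Suc 0..L}. BB)"
      by (intro prod_mono) (use Fj[OF t] F2_nonneg in auto)
    also have "\<dots> = BB^L" by simp
    finally have pb: "(\<Prod>j\<in>{Suc 0..L}. F2 t j) \<le> BB^L" .
    have "(mar (W t) i)^2 \<le> nsq (d 0) (qv L d (W t) 0) * nsq (d 0) (zz i)" by (rule mar_sq0)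
    also have "\<dots> \<le> BB^L * Z2"
      using qv_bound[OF t(1), of 0] pb Z2i[OF i] by (intro mult_mono) (auto simp: nsq_nonneg BB0)
    finally have "sqrt ((mar (W t) i)^2) \<le> sqrt (BB^L * Z2)" by (rule real_sqrt_le_mono)
    thus ?thesis unfolding Mb_def by simp
  qed
  have cpt: "compact {-Mb..Mb}" by simp
  have ne: "{-Mb..Mb} \<noteq> {}" using Mb0 by simp
  have lc: "continuous_on {-Mb..Mb} loss'" using loss'_cont continuous_on_subset by blast
  obtain x0 where x0: "x0 \<in> {-Mb..Mb}" "\<forall>x\<in>{-Mb..Mb}. loss' x \<le> loss' x0"
    using continuous_attains_sup[OF cpt ne lc] by blast
  obtain x1 where x1: "x1 \<in> {-Mb..Mb}" "\<forall>x\<in>{-Mb..Mb}. loss' x1 \<le> loss' x"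
    using continuous_attains_inf[OF cpt ne lc] by blast
  define lam where "lam = - loss' x0"
  define Lam where "Lam = - loss' x1"
  have lam0: "lam > 0" unfolding lam_def using loss'_neg by simp
  have Lam0: "Lam \<ge> 0" unfolding Lam_def using loss'_neg[rule_format, of x1] by simp
  have lbd: "- Lam \<le> loss' (mar (W t) i) \<and> loss' (mar (W t) i) \<le> - lam"
    if t: "t \<ge> 0" "F2 t L \<le> B" and i: "i < k" for t i
    using Mbd[OF t i] x0 x1 unfolding lam_def Lam_def by (auto simp: abs_le_iff)
  have k0: "k > 0" by (rule k_pos)
  have g0: "\<gamma> 0 > 0" using ub k0 unfolding \<gamma>_def by auto
  have "(\<gamma> 0)^2 \<le> nsq (d 0) (zz 0) * nsq (d 0) ub" unfolding \<gamma>_def by (rule CS_sum)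
  hence ub0: "nsq (d 0) ub > 0" using g0 nsq_nonneg[of "d 0" ub] nsq_nonneg[of "d 0" "zz 0"]
    by (metis less_eq_real_def mult_zero_right not_less zero_less_power)
  define \<Gamma> where "\<Gamma> = (\<Sum>i<k. \<gamma> i)"
  have \<Gamma>0: "\<Gamma> > 0" unfolding \<Gamma>_def by (rule sum_pos) (use ub k0 in \<open>auto simp: \<gamma>_def\<close>)
  define c where "c = delta^2 / (BB * Z2 + 1) * ((lam * \<Gamma> / real k)^2 / nsq (d 0) ub)"
  define K where "K = 2 * Lam * Mb + 1"
  have c0: "c > 0" unfolding c_def using delta BB0 Z20 lam0 \<Gamma>0 ub0 k0 by (intro mult_pos_pos divide_pos_pos) (auto intro: add_nonneg_pos)
  have K0: "K > 0" unfolding K_def using Lam0 Mb0 by (simp add: add_nonneg_pos)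
  have main: "- Gsq t \<le> - c \<and> \<bar>Nd t\<bar> \<le> K" if t: "t \<ge> 0" "F2 t L \<le> B" for t
  proof
    have "\<bar>Nd t\<bar> = (2 / real k) * \<bar>\<Sum>i<k. loss' (mar (W t) i) * mar (W t) i\<bar>"
      unfolding Nd_def by (simp add: abs_mult)
    also have "\<dots> \<le> (2 / real k) * (\<Sum>i<k. Lam * Mb)"
    proof (intro mult_left_mono order_trans[OF sum_abs] sum_mono)
      fix i assume "i \<in> {..<k}"
      hence i: "i < k" by simp
      have "\<bar>loss' (mar (W t) i)\<bar> \<le> Lam" using lbd[OF t i] loss'_neg[rule_format, of "mar (W t) i"] Lam0 by (simp add: abs_le_iff)
      thus "\<bar>loss' (mar (W t) i) * mar (W t) i\<bar> \<le> Lam * Mb"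
        unfolding abs_mult using Mbd[OF t i] by (intro mult_mono) auto
    qed simp
    also have "\<dots> = 2 * Lam * Mb" using k0 by simp
    finally show "\<bar>Nd t\<bar> \<le> K" unfolding K_def by simp
  next
    obtain i0 where i0: "i0 < k" "mar (W t) i0 > delta" using big_margin[OF t(1)] by blast
    have F1: "F2 t 1 \<le> BB" using Fj[OF t, of 1] L_pos by simp
    have "delta^2 < (mar (W t) i0)^2" using i0 delta by (intro power_strict_mono) auto
    also have "\<dots> \<le> nsq (d 1) (qv L d (W t) 1) * (F2 t 1 * nsq (d 0) (zz i0))" by (rule mar_sq1)
    also have "\<dots> \<le> nsq (d 1) (qv L d (W t) 1) * (BB * Z2 + 1)"
      using F1 Z2i[OF i0(1)] F2_nonneg[of t 1] nsq_nonneg[of "d 0" "zz i0"] BB0 nsq_nonneg[of "d 1"]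
      by (intro mult_left_mono) (auto intro: order_trans[OF mult_mono])
    finally have q1': "delta^2 \<le> nsq (d 1) (qv L d (W t) 1) * (BB * Z2 + 1)" by simp
    have pz: "BB * Z2 + 1 > 0" using BB0 Z20 by (simp add: add_nonneg_pos)
    have q1: "delta^2 / (BB * Z2 + 1) \<le> nsq (d 1) (qv L d (W t) 1)"
      using q1' pz by (simp add: divide_le_eq)
    define S where "S = (\<Sum>b<d 0. hv t b * ub b)"
    have "S = (1 / real k) * (\<Sum>i<k. loss' (mar (W t) i) * \<gamma> i)"
      unfolding S_def hv_def \<gamma>_def
      by (simp add: sum_distrib_left sum_distrib_right algebra_simps sum.swap[of _ "{..<d 0}"])
    also have "\<dots> \<le> (1 / real k) * (\<Sum>i<k. (- lam) * \<gamma> i)"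
      using lbd[OF t] ub unfolding \<gamma>_def by (intro mult_left_mono sum_mono mult_right_mono) auto
    also have "\<dots> = - (lam * \<Gamma> / real k)" unfolding \<Gamma>_def by (simp add: sum_distrib_left sum_negf sum_divide_distrib)
    finally have "S \<le> - (lam * \<Gamma> / real k)" .
    moreover have "lam * \<Gamma> / real k \<ge> 0" using lam0 \<Gamma>0 by simp
    ultimately have "(lam * \<Gamma> / real k)^2 \<le> (- S)^2"
      by (intro power_mono) auto
    hence "(lam * \<Gamma> / real k)^2 \<le> S^2" by simp
    also have "S^2 \<le> nsq (d 0) (hv t) * nsq (d 0) ub" unfolding S_def by (rule CS_sum)
    finally have h1: "(lam * \<Gamma> / real k)^2 / nsq (d 0) ub \<le> nsq (d 0) (hv t)"
      using ub0 by (simp add: divide_le_eq)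
    have "c \<le> nsq (d 1) (qv L d (W t) 1) * nsq (d 0) (hv t)"
      unfolding c_def using q1 h1 by (intro mult_mono) (auto simp: BB0 Z20 nsq_nonneg ub0 less_imp_le)
    also have "\<dots> \<le> Gsq t" by (rule Gsq_lower[OF t(1)])
    finally show "- Gsq t \<le> - c" by simp
  qed
  show ?thesis using c0 K0 main by blast
qed

lemma N_inf: "filterlim (\<lambda>t. F2 t L) at_top at_top"
proof (rule diverge[where R="\<lambda>t. Rk (W t)" and R'="\<lambda>t. - Gsq t" and N'=Nd])
  show "\<forall>t\<ge>0. ((\<lambda>t. F2 t L) has_real_derivative Nd t) (at t within {0..})"
    using dN unfolding Nd_def by blast
  show "\<forall>t\<ge>0. ((\<lambda>t. Rk (W t)) has_real_derivative - Gsq t) (at t within {0..})"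
    using dR by blast
  show "\<forall>t\<ge>0. 0 \<le> Rk (W t)" using R_nonneg by blast
  show "\<forall>t\<ge>0. - Gsq t \<le> 0" using Gsq_nonneg by simp
  show "\<And>B. \<exists>c>0. \<exists>K>0. \<forall>t\<ge>0. F2 t L \<le> B \<longrightarrow> - Gsq t \<le> - c \<and> \<bar>Nd t\<bar> \<le> K" by (rule bnd)
qed

end


context mp begin

lemma Wcar: "t \<ge> 0 \<Longrightarrow> j \<in> {1..L} \<Longrightarrow> W t j \<in> carrier_mat (d j) (d (j - 1))"
  using wdt unfolding weights_dims_def by blast

definition sg :: "real \<Rightarrow> nat \<Rightarrow> real" where
  "sg t j = (SOME \<sigma>. singular_triple (W t j) \<sigma> (u t j) (v t j) \<and>
     (\<forall>z. nsq (d j) (\<lambda>a. \<Sum>b<d (j - 1). W t j $$ (a,b) * z b) \<le> \<sigma>^2 * nsq (d (j - 1)) z))"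

lemma sg_props:
  assumes t: "t \<ge> 0" and j: "j \<in> {1..L}"
  shows "singular_triple (W t j) (sg t j) (u t j) (v t j)"
    "\<forall>z. nsq (d j) (\<lambda>a. \<Sum>b<d (j - 1). W t j $$ (a,b) * z b) \<le> (sg t j)^2 * nsq (d (j - 1)) z"
proof -
  have "\<exists>\<sigma>. singular_triple (W t j) \<sigma> (u t j) (v t j) \<and>
     (\<forall>z. nsq (d j) (\<lambda>a. \<Sum>b<d (j - 1). W t j $$ (a,b) * z b) \<le> \<sigma>^2 * nsq (d (j - 1)) z)"
    by (rule opnorm[OF Wcar[OF t j]]) (use sing t j in auto)
  from someI_ex[OF this] show "singular_triple (W t j) (sg t j) (u t j) (v t j)"
    "\<forall>z. nsq (d j) (\<lambda>a. \<Sum>b<d (j - 1). W t j $$ (a,b) * z b) \<le> (sg t j)^2 * nsq (d (j - 1)) z"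
    unfolding sg_def by auto
qed

definition U :: "real \<Rightarrow> nat \<Rightarrow> nat \<Rightarrow> real" where "U t j a = u t j $ a"
definition V :: "real \<Rightarrow> nat \<Rightarrow> nat \<Rightarrow> real" where "V t j a = v t j $ a"

lemma idx:
  assumes t: "t \<ge> 0" and j: "j \<in> {1..L}"
  shows "sg t j \<ge> 0" "nsq (d j) (U t j) = 1" "nsq (d (j - 1)) (V t j) = 1"
    "\<And>a. a < d j \<Longrightarrow> (\<Sum>b<d (j - 1). W t j $$ (a,b) * V t j b) = sg t j * U t j a"
    "\<And>b. b < d (j - 1) \<Longrightarrow> (\<Sum>a<d j. W t j $$ (a,b) * U t j a) = sg t j * V t j b"
    "u t j \<in> carrier_vec (d j)" "v t j \<in> carrier_vec (d (j - 1))"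
  using triple_index[OF Wcar[OF t j] sg_props(1)[OF t j]] unfolding U_def V_def by auto

lemma opT: "t \<ge> 0 \<Longrightarrow> j \<in> {1..L} \<Longrightarrow>
  nsq (d (j - 1)) (\<lambda>b. \<Sum>a<d j. W t j $$ (a,b) * x a) \<le> (sg t j)^2 * nsq (d j) x"
  by (rule opnormT) (use sg_props(2) in auto)

lemma sg_le: "t \<ge> 0 \<Longrightarrow> j \<in> {1..L} \<Longrightarrow> (sg t j)^2 \<le> F2 t j"
  unfolding F2_def by (rule sigma_le_fro[OF idx(2,3,4)]) auto

definition KD :: "nat \<Rightarrow> real" where "KD jj = (\<Sum>a<d (Suc jj). \<Sum>b<d (Suc jj). \<bar>Dm 0 jj a b\<bar>)"

lemma Qbound:
  assumes t: "t \<ge> 0" and jj: "Suc (Suc jj) \<le> L"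
  shows "nsq (d jj) (\<lambda>c. \<Sum>a<d (Suc jj). W t (Suc jj) $$ (a,c) * V t (Suc (Suc jj)) a) \<ge> (sg t (Suc (Suc jj)))^2 - KD jj"
proof -
  have j2: "Suc (Suc jj) \<in> {1..L}" using jj by simp
  have x1: "nsq (d (Suc jj)) (V t (Suc (Suc jj))) = 1" using idx(3)[OF t j2] by simp
  have "nsq (d (Suc (Suc jj))) (\<lambda>c. \<Sum>a<d (Suc jj). W t (Suc (Suc jj)) $$ (c,a) * V t (Suc (Suc jj)) a)
      = nsq (d (Suc (Suc jj))) (\<lambda>c. sg t (Suc (Suc jj)) * U t (Suc (Suc jj)) c)"
    unfolding nsq_def using idx(4)[OF t j2] by (intro sum.cong refl) simp
  also have "\<dots> = (sg t (Suc (Suc jj)))^2"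
    using idx(2)[OF t j2] unfolding nsq_def by (simp add: power_mult_distrib sum_distrib_left[symmetric])
  finally have e: "nsq (d (Suc (Suc jj))) (\<lambda>c. \<Sum>a<d (Suc jj). W t (Suc (Suc jj)) $$ (c,a) * V t (Suc (Suc jj)) a) = (sg t (Suc (Suc jj)))^2" .
  have "\<bar>\<Sum>a<d (Suc jj). \<Sum>b<d (Suc jj). V t (Suc (Suc jj)) a * V t (Suc (Suc jj)) b * Dm 0 jj a b\<bar> \<le> KD jj"
    unfolding KD_def by (rule quad_bound) (simp add: x1)
  thus ?thesis using quadform[OF t jj, of "V t (Suc (Suc jj))"] e by simp
qed

lemma sg_lower: "1 \<le> j \<Longrightarrow> j \<le> L \<Longrightarrow> \<exists>C. \<forall>t\<ge>0. F2 t j - C \<le> (sg t j)^2"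
proof -
  have "\<forall>j. L - j = m \<longrightarrow> 1 \<le> j \<longrightarrow> j \<le> L \<longrightarrow> (\<exists>C. \<forall>t\<ge>0. F2 t j - C \<le> (sg t j)^2)" for m
  proof (induction m)
    case 0
    show ?case
    proof (intro allI impI)
      fix j assume "L - j = 0" "1 \<le> j" "j \<le> L"
      hence j: "j = L" by simp
      have "F2 t L \<le> (sg t L)^2" if t: "t \<ge> 0" for t
      proof -
        have jL: "L \<in> {1..L}" using L_pos by simp
        define z where "z = (\<lambda>b. W t L $$ (0,b))"
        have F: "F2 t L = nsq (d (L - 1)) z" unfolding F2_def fro_def nsq_def z_def using d_L by simp
        have e1: "nsq (d L) (\<lambda>a. \<Sum>b<d (L - 1). W t L $$ (a,b) * z b) = (F2 t L)^2"
          unfolding F nsq_def z_def using d_L by (simp add: power2_eq_square)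
        have e2: "nsq (d L) (\<lambda>a. \<Sum>b<d (L - 1). W t L $$ (a,b) * z b) \<le> (sg t L)^2 * F2 t L"
          using sg_props(2)[OF t jL] F by simp
        have "F2 t L * F2 t L \<le> (sg t L)^2 * F2 t L" using e1 e2 by (simp add: power2_eq_square)
        thus ?thesis using F2_nonneg[of t L]
          by (cases "F2 t L = 0") (auto simp: mult_le_cancel_right)
      qed
      thus "\<exists>C. \<forall>t\<ge>0. F2 t j - C \<le> (sg t j)^2" unfolding j by (intro exI[of _ 0]) simp
    qed
  next
    case (Suc m)
    show ?case
    proof (intro allI impI)
      fix j assume a: "L - j = Suc m" "1 \<le> j" "j \<le> L"
      obtain jj where jj: "j = Suc jj" using a by (cases j) auto
      have jjL: "Suc (Suc jj) \<le> L" using a jj by simp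
      obtain C where C: "\<forall>t\<ge>0. F2 t (Suc (Suc jj)) - C \<le> (sg t (Suc (Suc jj)))^2"
        using Suc.IH a jj by (metis Suc_diff_Suc Suc_le_lessD diff_Suc_Suc le_add2 add_2_eq_Suc' le_Suc_eq jjL nat.inject)
      define C' where "C' = C + KD jj - (F2 0 (Suc (Suc jj)) - F2 0 (Suc jj))"
      have "F2 t (Suc jj) - C' \<le> (sg t (Suc jj))^2" if t: "t \<ge> 0" for t
      proof -
        have j1: "Suc jj \<in> {1..L}" using jjL by simp
        have "(sg t (Suc (Suc jj)))^2 - KD jj \<le> nsq (d jj) (\<lambda>c. \<Sum>a<d (Suc jj). W t (Suc jj) $$ (a,c) * V t (Suc (Suc jj)) a)"
          by (rule Qbound[OF t jjL])
        also have "\<dots> \<le> (sg t (Suc jj))^2 * nsq (d (Suc jj)) (V t (Suc (Suc jj)))"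
          using opT[OF t j1] by simp
        also have "nsq (d (Suc jj)) (V t (Suc (Suc jj))) = 1" using idx(3)[OF t, of "Suc (Suc jj)"] jjL by simp
        finally have "(sg t (Suc (Suc jj)))^2 - KD jj \<le> (sg t (Suc jj))^2" by simp
        moreover have "F2 t (Suc (Suc jj)) - F2 t (Suc jj) = F2 0 (Suc (Suc jj)) - F2 0 (Suc jj)"
          by (rule F2_diff_const[OF t jjL])
        ultimately show ?thesis using C t unfolding C'_def by force
      qed
      thus "\<exists>C. \<forall>t\<ge>0. F2 t j - C \<le> (sg t j)^2" unfolding jj by blast
    qed
  qed
  thus "1 \<le> j \<Longrightarrow> j \<le> L \<Longrightarrow> \<exists>C. \<forall>t\<ge>0. F2 t j - C \<le> (sg t j)^2" by blast
qed

lemma align_bound: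
  assumes jj: "Suc (Suc jj) \<le> L"
  shows "\<exists>C. \<forall>t\<ge>0. F2 t (Suc (Suc jj)) - C \<le> (\<Sum>a<d (Suc jj). U t (Suc jj) a * V t (Suc (Suc jj)) a)^2 * F2 t (Suc jj)"
proof -
  obtain C1 where C1: "\<forall>t\<ge>0. F2 t (Suc jj) - C1 \<le> (sg t (Suc jj))^2" using sg_lower[of "Suc jj"] jj by auto
  obtain C2 where C2: "\<forall>t\<ge>0. F2 t (Suc (Suc jj)) - C2 \<le> (sg t (Suc (Suc jj)))^2" using sg_lower[of "Suc (Suc jj)"] jj by auto
  define C where "C = C2 + KD jj + C1"
  have "F2 t (Suc (Suc jj)) - C \<le> (\<Sum>a<d (Suc jj). U t (Suc jj) a * V t (Suc (Suc jj)) a)^2 * F2 t (Suc jj)"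
    if t: "t \<ge> 0" for t
  proof -
    have j1: "Suc jj \<in> {1..L}" using jj by simp
    define al where "al = (\<Sum>a<d (Suc jj). U t (Suc jj) a * V t (Suc (Suc jj)) a)"
    have x1: "nsq (d (Suc jj)) (V t (Suc (Suc jj))) = 1" using idx(3)[OF t, of "Suc (Suc jj)"] jj by simp
    have "(sg t (Suc (Suc jj)))^2 - KD jj \<le> nsq (d jj) (\<lambda>c. \<Sum>a<d (Suc jj). W t (Suc jj) $$ (a,c) * V t (Suc (Suc jj)) a)"
      by (rule Qbound[OF t jj])
    also have "\<dots> \<le> (sg t (Suc jj))^2 * al^2 + (F2 t (Suc jj) - (sg t (Suc jj))^2) * 1"
      using transpose_split[OF idx(2,3,4)[OF t j1], of "V t (Suc (Suc jj))"] x1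
      unfolding al_def F2_def by simp
    finally have *: "(sg t (Suc (Suc jj)))^2 - KD jj - (F2 t (Suc jj) - (sg t (Suc jj))^2) \<le> (sg t (Suc jj))^2 * al^2"
      by simp
    have "(sg t (Suc jj))^2 * al^2 \<le> F2 t (Suc jj) * al^2" using sg_le[OF t j1] by (intro mult_right_mono) auto
    thus ?thesis using * C1 C2 t unfolding C_def al_def by (smt (verit) mult.commute)
  qed
  thus ?thesis by blast
qed

end


lemma abs_tri_low: "\<bar>(x::real) + y\<bar> \<ge> \<bar>x\<bar> - \<bar>y\<bar>" by arith

lemma geom:
  assumes b1: "nsq r b \<le> 1" and u1: "nsq r u = 1" and v1: "nsq r v = 1"
  shows "\<bar>\<Sum>i<r. b i * v i\<bar> \<ge> \<bar>\<Sum>i<r. b i * u i\<bar> * \<bar>\<Sum>i<r. u i * v i\<bar> - sqrt (1 - (\<Sum>i<r. b i * u i)^2)"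
proof -
  define \<beta> where "\<beta> = (\<Sum>i<r. b i * u i)"
  define e where "e = (\<lambda>i. b i - \<beta> * u i)"
  have split: "(\<Sum>i<r. b i * v i) = \<beta> * (\<Sum>i<r. u i * v i) + (\<Sum>i<r. e i * v i)"
    unfolding e_def by (simp add: algebra_simps sum_subtractf sum_distrib_left)
  have "nsq r e = nsq r b - 2 * \<beta> * \<beta> + \<beta>^2 * nsq r u"
  proof -
    have "nsq r e = (\<Sum>i<r. (b i)^2 - (2 * \<beta>) * (b i * u i) + \<beta>^2 * (u i)^2)"
      unfolding nsq_def e_def by (intro sum.cong refl) (simp add: power2_diff power_mult_distrib algebra_simps)
    also have "\<dots> = nsq r b - 2 * \<beta> * \<beta> + \<beta>^2 * nsq r u"
      unfolding nsq_def \<beta>_def by (simp add: sum.distrib sum_subtractf sum_distrib_left)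
    finally show ?thesis .
  qed
  hence ne: "nsq r e \<le> 1 - \<beta>^2" using b1 u1 by (simp add: power2_eq_square)
  have "\<bar>\<Sum>i<r. e i * v i\<bar> \<le> sqrt (nsq r e) * sqrt (nsq r v)" by (rule CS_abs)
  also have "\<dots> \<le> sqrt (1 - \<beta>^2)" using ne v1 by simp
  finally have "\<bar>\<Sum>i<r. e i * v i\<bar> \<le> sqrt (1 - \<beta>^2)" .
  moreover have "\<bar>\<beta> * (\<Sum>i<r. u i * v i) + (\<Sum>i<r. e i * v i)\<bar> \<ge> \<bar>\<beta> * (\<Sum>i<r. u i * v i)\<bar> - \<bar>\<Sum>i<r. e i * v i\<bar>"
    by (rule abs_tri_low)
  ultimately show ?thesis unfolding split \<beta>_def[symmetric] by (simp add: abs_mult)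
qed

lemma unit_ip: "nsq r b \<le> 1 \<Longrightarrow> nsq r v = 1 \<Longrightarrow> \<bar>\<Sum>i<r. b i * v i\<bar> \<le> 1"
proof -
  assume a: "nsq r b \<le> 1" "nsq r v = 1"
  have "sqrt (nsq r b) \<le> 1" using a by simp
  hence "sqrt (nsq r b) * sqrt (nsq r v) \<le> 1" using a by simp
  thus ?thesis using CS_abs[of b v r] by linarith
qed

lemma abs_sq_lim:
  fixes f :: "real \<Rightarrow> real"
  assumes "((\<lambda>t. (f t)^2) \<longlongrightarrow> 1) at_top"
  shows "((\<lambda>t. \<bar>f t\<bar>) \<longlongrightarrow> 1) at_top"
proof -
  have "((\<lambda>t. sqrt ((f t)^2)) \<longlongrightarrow> sqrt 1) at_top" by (intro tendsto_intros assms)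
  thus ?thesis by simp
qed


lemma one_plus_div: "(x::real) \<noteq> 0 \<Longrightarrow> 1 + y / x = (x + y) / x"
  by (simp add: field_simps)

context mp begin

lemma ev_t: "eventually (\<lambda>t. t \<ge> (0::real)) at_top"
  by (simp add: eventually_ge_at_top)

lemma ev_N: "eventually (\<lambda>t. F2 t L \<ge> M) at_top"
  using N_inf unfolding filterlim_at_top by blast

lemma ratio_lim: "((\<lambda>t. (F2 t L + a) / (F2 t L + b)) \<longlongrightarrow> 1) at_top"
proof -
  have inf: "filterlim (\<lambda>t. F2 t L + b) at_top at_top"
    using filterlim_tendsto_add_at_top[OF tendsto_const[of b] N_inf] by (simp add: add.commute)
  have "((\<lambda>t. (a - b) / (F2 t L + b)) \<longlongrightarrow> 0) at_top"
    by (rule tendsto_divide_0[OF tendsto_const filterlim_at_top_imp_at_infinity[OF inf]])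
  hence "((\<lambda>t. 1 + (a - b) / (F2 t L + b)) \<longlongrightarrow> 1 + 0) at_top" by (intro tendsto_intros)
  hence "((\<lambda>t. 1 + (a - b) / (F2 t L + b)) \<longlongrightarrow> 1) at_top" by simp
  moreover have "eventually (\<lambda>t. 1 + (a - b) / (F2 t L + b) = (F2 t L + a) / (F2 t L + b)) at_top"
    using ev_N[of "1 - b"]
  proof eventually_elim
    case (elim t)
    hence nz: "F2 t L + b \<noteq> 0" by simp
    have "1 + (a - b) / (F2 t L + b) = ((F2 t L + b) + (a - b)) / (F2 t L + b)"
      by (rule one_plus_div[OF nz])
    also have "(F2 t L + b) + (a - b) = F2 t L + a" by simp
    finally show ?case .
  qed
  ultimately show ?thesis by (rule Lim_transform_eventually)
qed

lemma sg_ratio: assumes j: "j \<in> {1..L}" shows "((\<lambda>t. sg t j / sqrt (F2 t j)) \<longlongrightarrow> 1) at_top"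
proof -
  have "1 \<le> j" "j \<le> L" using j by auto
  then obtain C where C: "\<forall>t\<ge>0. F2 t j - C \<le> (sg t j)^2" using sg_lower by blast
  have sq: "((\<lambda>t. (sg t j)^2 / F2 t j) \<longlongrightarrow> 1) at_top"
  proof (rule tendsto_sandwich)
    show "((\<lambda>t. (F2 t L + (cst j - C)) / (F2 t L + cst j)) \<longlongrightarrow> 1) at_top" by (rule ratio_lim)
    show "((\<lambda>t. 1) \<longlongrightarrow> (1::real)) at_top" by simp
    show "eventually (\<lambda>t. (F2 t L + (cst j - C)) / (F2 t L + cst j) \<le> (sg t j)^2 / F2 t j) at_top"
      using ev_t ev_N[of "1 - cst j"]
    proof eventually_elim
      case (elim t)
      have F: "F2 t j = F2 t L + cst j" using F2_rel[OF elim(1), of j] j by simp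
      have pos: "F2 t j > 0" using F elim by simp
      have "F2 t j - C \<le> (sg t j)^2" using C elim by auto
      hence le: "(F2 t j - C) / F2 t j \<le> (sg t j)^2 / F2 t j" using pos by (intro divide_right_mono) auto
      have e: "(F2 t L + (cst j - C)) / (F2 t L + cst j) = (F2 t j - C) / F2 t j" using F by (simp add: algebra_simps)
      show ?case unfolding e by (rule le)
    qed
    show "eventually (\<lambda>t. (sg t j)^2 / F2 t j \<le> 1) at_top"
      using ev_t
    proof eventually_elim
      case (elim t)
      show ?case
      proof (cases "F2 t j = 0")
        case True thus ?thesis by simp
      next
        case False
        hence pos: "F2 t j > 0" using F2_nonneg[of t j] by simp
        have "(sg t j)^2 / F2 t j \<le> F2 t j / F2 t j" using sg_le[OF elim j] pos by (intro divide_right_mono) auto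
        thus ?thesis using pos by simp
      qed
    qed
  qed
  have "((\<lambda>t. sqrt ((sg t j)^2 / F2 t j)) \<longlongrightarrow> sqrt 1) at_top" by (rule tendsto_real_sqrt[OF sq])
  hence "((\<lambda>t. sqrt ((sg t j)^2 / F2 t j)) \<longlongrightarrow> 1) at_top" by simp
  moreover have "eventually (\<lambda>t. sqrt ((sg t j)^2 / F2 t j) = sg t j / sqrt (F2 t j)) at_top"
    using ev_t
  proof eventually_elim
    case (elim t)
    have "sg t j \<ge> 0" using idx(1)[OF elim j] .
    thus ?case by (simp add: real_sqrt_divide)
  qed
  ultimately show ?thesis by (rule Lim_transform_eventually)
qed

lemma align_lim:
  assumes jj: "Suc (Suc jj) \<le> L"
  shows "((\<lambda>t. \<bar>\<Sum>a<d (Suc jj). U t (Suc jj) a * V t (Suc (Suc jj)) a\<bar>) \<longlongrightarrow> 1) at_top"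
proof (rule abs_sq_lim)
  obtain C where C: "\<forall>t\<ge>0. F2 t (Suc (Suc jj)) - C \<le> (\<Sum>a<d (Suc jj). U t (Suc jj) a * V t (Suc (Suc jj)) a)^2 * F2 t (Suc jj)"
    using align_bound[OF jj] by blast
  have j1: "Suc jj \<in> {1..L}" and j2: "Suc (Suc jj) \<in> {1..L}" using jj by auto
  show "((\<lambda>t. (\<Sum>a<d (Suc jj). U t (Suc jj) a * V t (Suc (Suc jj)) a)^2) \<longlongrightarrow> 1) at_top"
  proof (rule tendsto_sandwich)
    show "((\<lambda>t. (F2 t L + (cst (Suc (Suc jj)) - C)) / (F2 t L + cst (Suc jj))) \<longlongrightarrow> 1) at_top" by (rule ratio_lim)
    show "((\<lambda>t. 1) \<longlongrightarrow> (1::real)) at_top" by simp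
    show "eventually (\<lambda>t. (F2 t L + (cst (Suc (Suc jj)) - C)) / (F2 t L + cst (Suc jj)) \<le> (\<Sum>a<d (Suc jj). U t (Suc jj) a * V t (Suc (Suc jj)) a)^2) at_top"
      using ev_t ev_N[of "1 - cst (Suc jj)"]
    proof eventually_elim
      case (elim t)
      have F1: "F2 t (Suc jj) = F2 t L + cst (Suc jj)" using F2_rel[OF elim(1), of "Suc jj"] jj by simp
      have F2': "F2 t (Suc (Suc jj)) = F2 t L + cst (Suc (Suc jj))" using F2_rel[OF elim(1), of "Suc (Suc jj)"] jj by simp
      have pos: "F2 t (Suc jj) > 0" using F1 elim by simp
      have "F2 t (Suc (Suc jj)) - C \<le> (\<Sum>a<d (Suc jj). U t (Suc jj) a * V t (Suc (Suc jj)) a)^2 * F2 t (Suc jj)"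
        using C elim by auto
      hence "(F2 t (Suc (Suc jj)) - C) / F2 t (Suc jj) \<le> (\<Sum>a<d (Suc jj). U t (Suc jj) a * V t (Suc (Suc jj)) a)^2"
        using pos by (simp add: pos_divide_le_eq)
      moreover have "(F2 t L + (cst (Suc (Suc jj)) - C)) / (F2 t L + cst (Suc jj)) = (F2 t (Suc (Suc jj)) - C) / F2 t (Suc jj)"
        using F1 F2' by (simp add: algebra_simps)
      ultimately show ?case by simp
    qed
    show "eventually (\<lambda>t. (\<Sum>a<d (Suc jj). U t (Suc jj) a * V t (Suc (Suc jj)) a)^2 \<le> 1) at_top"
      using ev_t
    proof eventually_elim
      case (elim t)
      have "\<bar>\<Sum>a<d (Suc jj). U t (Suc jj) a * V t (Suc (Suc jj)) a\<bar> \<le> 1"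
        using unit_ip[of "d (Suc jj)" "U t (Suc jj)" "V t (Suc (Suc jj))"] idx(2)[OF elim j1] idx(3)[OF elim j2] by simp
      thus ?case by (simp add: abs_square_le_1)
    qed
  qed
qed

end


context mp begin

definition Fr :: "real \<Rightarrow> nat \<Rightarrow> real" where "Fr t j = sqrt (F2 t j)"

lemma frob_W: "t \<ge> 0 \<Longrightarrow> j \<in> {1..L} \<Longrightarrow> frob_norm (W t j) = Fr t j"
proof -
  assume t: "t \<ge> 0" and j: "j \<in> {1..L}"
  have "W t j \<in> carrier_mat (d j) (d (j-1))" by (rule Wcar[OF t j])
  hence "dim_row (W t j) = d j" "dim_col (W t j) = d (j - 1)" by auto
  thus ?thesis unfolding frob_norm_def Fr_def F2_def fro_def by simp
qed

lemma F2_pos_ev: assumes j: "j \<in> {1..L}" shows "eventually (\<lambda>t. t \<ge> 0 \<and> F2 t j > 0) at_top"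
  using ev_t ev_N[of "1 - cst j"]
proof eventually_elim
  case (elim t)
  have "F2 t j = F2 t L + cst j" using F2_rel[OF elim(1), of j] j by simp
  thus ?case using elim by simp
qed

lemma part1_eq:
  assumes t: "t \<ge> 0" and j: "j \<in> {1..L}" and pos: "F2 t j > 0"
  shows "frob_norm ((1 / frob_norm (W t j)) \<cdot>\<^sub>m W t j - outer_prod (u t j) (v t j)) =
         sqrt (2 - 2 * (sg t j / Fr t j))"
proof -
  have Wc: "W t j \<in> carrier_mat (d j) (d (j - 1))" by (rule Wcar[OF t j])
  have uc: "u t j \<in> carrier_vec (d j)" and vc: "v t j \<in> carrier_vec (d (j - 1))" using idx(6,7)[OF t j] by auto
  define Fj where "Fj = Fr t j"
  have Fj: "Fj > 0" "Fj^2 = F2 t j" unfolding Fj_def Fr_def using pos by auto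
  define M where "M = (1 / Fj) \<cdot>\<^sub>m W t j - outer_prod (u t j) (v t j)"
  have dims: "dim_row M = d j" "dim_col M = d (j - 1)"
    unfolding M_def outer_prod_def using uc vc by auto
  have ent: "M $$ (a,b) = (W t j $$ (a,b) - Fj * U t j a * V t j b) / Fj" if "a < d j" "b < d (j - 1)" for a b
    unfolding M_def outer_prod_def U_def V_def using that Wc uc vc Fj by (auto simp: field_simps)
  have "(\<Sum>a<d j. \<Sum>b<d (j - 1). (M $$ (a,b))^2) = (\<Sum>a<d j. \<Sum>b<d (j - 1). (W t j $$ (a,b) - Fj * U t j a * V t j b)^2) / Fj^2"
    using ent by (simp add: power_divide sum_divide_distrib)
  also have "(\<Sum>a<d j. \<Sum>b<d (j - 1). (W t j $$ (a,b) - Fj * U t j a * V t j b)^2) = F2 t j - 2 * Fj * sg t j + Fj^2"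
    unfolding F2_def by (rule rank1_dist[OF idx(2,3,4)[OF t j]]) auto
  also have "(F2 t j - 2 * Fj * sg t j + Fj^2) / Fj^2 = 2 - 2 * (sg t j / Fj)"
    unfolding Fj(2)[symmetric] using Fj(1) by (simp add: field_simps power2_eq_square)
  finally have S: "(\<Sum>a<d j. \<Sum>b<d (j - 1). (M $$ (a,b))^2) = 2 - 2 * (sg t j / Fj)" .
  have fW: "frob_norm (W t j) = Fj" unfolding Fj_def by (rule frob_W[OF t j])
  have "frob_norm ((1 / frob_norm (W t j)) \<cdot>\<^sub>m W t j - outer_prod (u t j) (v t j)) = frob_norm M"
    unfolding fW M_def ..
  also have "\<dots> = sqrt (\<Sum>a<d j. \<Sum>b<d (j - 1). (M $$ (a,b))^2)" unfolding frob_norm_def dims ..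
  finally show ?thesis using S unfolding Fj_def by simp
qed

lemma part1: "j \<in> {1..L} \<Longrightarrow>
  ((\<lambda>t. frob_norm ((1 / frob_norm (W t j)) \<cdot>\<^sub>m W t j - outer_prod (u t j) (v t j))) \<longlongrightarrow> 0) at_top"
proof -
  assume j: "j \<in> {1..L}"
  have r: "((\<lambda>t. sg t j / Fr t j) \<longlongrightarrow> 1) at_top" using sg_ratio[OF j] unfolding Fr_def .
  have "((\<lambda>t. sqrt (2 - 2 * (sg t j / Fr t j))) \<longlongrightarrow> sqrt (2 - 2 * 1)) at_top"
    by (intro tendsto_intros r)
  hence l: "((\<lambda>t. sqrt (2 - 2 * (sg t j / Fr t j))) \<longlongrightarrow> 0) at_top" by simp
  have "eventually (\<lambda>t. sqrt (2 - 2 * (sg t j / Fr t j)) =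
     frob_norm ((1 / frob_norm (W t j)) \<cdot>\<^sub>m W t j - outer_prod (u t j) (v t j))) at_top"
    using F2_pos_ev[OF j] by eventually_elim (use part1_eq j in auto)
  thus ?thesis using l by (rule Lim_transform_eventually[rotated])
qed

end


context mp begin

fun bn :: "real \<Rightarrow> nat \<Rightarrow> nat \<Rightarrow> real" where
  "bn t 0 = V t 1"
| "bn t (Suc j) = (\<lambda>a. (\<Sum>c<d j. W t (Suc j) $$ (a,c) * bn t j c) / Fr t (Suc j))"

lemma bn_eq: "bn t j a = pvec d (W t) (V t 1) j a / (\<Prod>i\<in>{1..j}. Fr t i)"
proof (induction j arbitrary: a)
  case 0 thus ?case by simp
next
  case (Suc j)
  have "bn t (Suc j) a = (\<Sum>c<d j. W t (Suc j) $$ (a,c) * pvec d (W t) (V t 1) j c) / (\<Prod>i\<in>{1..j}. Fr t i) / Fr t (Suc j)"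
    using Suc by (simp add: sum_divide_distrib)
  also have "\<dots> = pvec d (W t) (V t 1) (Suc j) a / (\<Prod>i\<in>{1..Suc j}. Fr t i)"
    by (simp add: prod.cl_ivl_Suc mult.commute)
  finally show ?case .
qed

lemma bn_nsq: "t \<ge> 0 \<Longrightarrow> j \<le> L \<Longrightarrow> nsq (d j) (bn t j) \<le> 1"
proof (induction j)
  case 0
  have "nsq (d (1 - 1)) (V t 1) = 1" using idx(3)[OF 0(1), of 1] L_pos by simp
  thus ?case by simp
next
  case (Suc j)
  have IH: "nsq (d j) (bn t j) \<le> 1" using Suc by simp
  show ?case
  proof (cases "F2 t (Suc j) = 0")
    case True
    hence "Fr t (Suc j) = 0" unfolding Fr_def by simp
    thus ?thesis by (simp add: nsq_def)
  next
    case False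
    hence pos: "F2 t (Suc j) > 0" using F2_nonneg[of t "Suc j"] by simp
    have "nsq (d (Suc j)) (bn t (Suc j)) = (\<Sum>a<d (Suc j). ((\<Sum>c<d j. W t (Suc j) $$ (a,c) * bn t j c) / Fr t (Suc j))^2)"
      by (simp only: nsq_def bn.simps)
    also have "\<dots> = (\<Sum>a<d (Suc j). (\<Sum>c<d j. W t (Suc j) $$ (a,c) * bn t j c)^2) / (Fr t (Suc j))^2"
      unfolding power_divide by (rule sum_divide_distrib[symmetric])
    also have "(Fr t (Suc j))^2 = F2 t (Suc j)" unfolding Fr_def using pos by simp
    finally have "nsq (d (Suc j)) (bn t (Suc j)) = nsq (d (Suc j)) (\<lambda>a. \<Sum>c<d j. W t (Suc j) $$ (a,c) * bn t j c) / F2 t (Suc j)"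
      by (simp only: nsq_def)
    also have "\<dots> \<le> F2 t (Suc j) * nsq (d j) (bn t j) / F2 t (Suc j)"
      using app_bound[where r="d (Suc j)" and c="d j" and w="\<lambda>a c. W t (Suc j) $$ (a,c)" and x="bn t j"] pos
      unfolding F2_def fro_def by (intro divide_right_mono) auto
    also have "\<dots> \<le> 1" using pos IH by simp
    finally show ?thesis .
  qed
qed

lemma bn_rel:
  assumes t: "t \<ge> 0" and j: "Suc j \<le> L"
  shows "(\<Sum>a<d (Suc j). bn t (Suc j) a * U t (Suc j) a) = sg t (Suc j) / Fr t (Suc j) * (\<Sum>c<d j. bn t j c * V t (Suc j) c)"
proof -
  have j1: "Suc j \<in> {1..L}" using j by simp
  have "(\<Sum>a<d (Suc j). bn t (Suc j) a * U t (Suc j) a) =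
        (\<Sum>a<d (Suc j). \<Sum>c<d j. U t (Suc j) a * W t (Suc j) $$ (a,c) * bn t j c) / Fr t (Suc j)"
    by (simp add: sum_divide_distrib sum_distrib_left algebra_simps)
  also have "\<dots> = (\<Sum>c<d j. bn t j c * (\<Sum>a<d (Suc j). W t (Suc j) $$ (a,c) * U t (Suc j) a)) / Fr t (Suc j)"
    by (subst sum.swap) (simp add: sum_distrib_left algebra_simps)
  also have "\<dots> = (\<Sum>c<d j. bn t j c * (sg t (Suc j) * V t (Suc j) c)) / Fr t (Suc j)"
    using idx(5)[OF t j1] by simp
  also have "\<dots> = sg t (Suc j) / Fr t (Suc j) * (\<Sum>c<d j. bn t j c * V t (Suc j) c)"
    by (simp add: sum_distrib_left sum_divide_distrib algebra_simps)
  finally show ?thesis .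
qed

lemma beta_lim:
  assumes j: "Suc j \<le> L"
    and prev: "((\<lambda>t. \<bar>\<Sum>c<d j. bn t j c * V t (Suc j) c\<bar>) \<longlongrightarrow> 1) at_top"
  shows "((\<lambda>t. \<bar>\<Sum>a<d (Suc j). bn t (Suc j) a * U t (Suc j) a\<bar>) \<longlongrightarrow> 1) at_top"
proof -
  have j1: "Suc j \<in> {1..L}" using j by simp
  have r: "((\<lambda>t. sg t (Suc j) / Fr t (Suc j)) \<longlongrightarrow> 1) at_top" using sg_ratio[OF j1] unfolding Fr_def .
  have "((\<lambda>t. sg t (Suc j) / Fr t (Suc j) * \<bar>\<Sum>c<d j. bn t j c * V t (Suc j) c\<bar>) \<longlongrightarrow> 1 * 1) at_top"
    by (rule tendsto_mult[OF r prev])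
  moreover have "eventually (\<lambda>t. sg t (Suc j) / Fr t (Suc j) * \<bar>\<Sum>c<d j. bn t j c * V t (Suc j) c\<bar> =
      \<bar>\<Sum>a<d (Suc j). bn t (Suc j) a * U t (Suc j) a\<bar>) at_top"
    using ev_t
  proof eventually_elim
    case (elim t)
    have "sg t (Suc j) / Fr t (Suc j) \<ge> 0" using idx(1)[OF elim j1] unfolding Fr_def using F2_nonneg[of t "Suc j"] by (intro divide_nonneg_nonneg) auto
    hence "\<bar>sg t (Suc j) / Fr t (Suc j)\<bar> = sg t (Suc j) / Fr t (Suc j)" by (rule abs_of_nonneg)
    thus ?case unfolding bn_rel[OF elim j] abs_mult by simp
  qed
  ultimately show ?thesis by (simp add: Lim_transform_eventually)
qed

lemma chain_lim: "Suc j \<le> L \<Longrightarrow> ((\<lambda>t. \<bar>\<Sum>c<d j. bn t j c * V t (Suc j) c\<bar>) \<longlongrightarrow> 1) at_top"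
proof (induction j)
  case 0
  have "eventually (\<lambda>t. \<bar>\<Sum>c<d 0. bn t 0 c * V t (Suc 0) c\<bar> = 1) at_top"
    using ev_t
  proof eventually_elim
    case (elim t)
    have "nsq (d (1 - 1)) (V t 1) = 1" using idx(3)[OF elim, of 1] L_pos by simp
    thus ?case unfolding nsq_def by (simp add: power2_eq_square)
  qed
  thus ?case by (rule tendsto_eventually)
next
  case (Suc j)
  have jL: "Suc j \<le> L" using Suc.prems by simp
  have j1: "Suc j \<in> {1..L}" and j2: "Suc (Suc j) \<in> {1..L}" using Suc.prems by auto
  define \<beta> where "\<beta> t = (\<Sum>a<d (Suc j). bn t (Suc j) a * U t (Suc j) a)" for t
  define \<alpha> where "\<alpha> t = (\<Sum>a<d (Suc j). U t (Suc j) a * V t (Suc (Suc j)) a)" for t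
  have b: "((\<lambda>t. \<bar>\<beta> t\<bar>) \<longlongrightarrow> 1) at_top" unfolding \<beta>_def by (rule beta_lim[OF jL Suc.IH[OF jL]])
  have a: "((\<lambda>t. \<bar>\<alpha> t\<bar>) \<longlongrightarrow> 1) at_top" unfolding \<alpha>_def by (rule align_lim) (use Suc.prems in simp)
  have b2: "((\<lambda>t. (\<beta> t)^2) \<longlongrightarrow> 1) at_top"
  proof -
    have "((\<lambda>t. \<bar>\<beta> t\<bar>^2) \<longlongrightarrow> 1^2) at_top" by (rule tendsto_power[OF b])
    thus ?thesis by simp
  qed
  have low: "((\<lambda>t. \<bar>\<beta> t\<bar> * \<bar>\<alpha> t\<bar> - sqrt (1 - (\<beta> t)^2)) \<longlongrightarrow> 1 * 1 - sqrt (1 - 1)) at_top"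
    by (intro tendsto_intros b a b2)
  show ?case
  proof (rule tendsto_sandwich)
    show "((\<lambda>t. \<bar>\<beta> t\<bar> * \<bar>\<alpha> t\<bar> - sqrt (1 - (\<beta> t)^2)) \<longlongrightarrow> 1) at_top" using low by simp
    show "((\<lambda>t. 1) \<longlongrightarrow> (1::real)) at_top" by simp
    show "eventually (\<lambda>t. \<bar>\<beta> t\<bar> * \<bar>\<alpha> t\<bar> - sqrt (1 - (\<beta> t)^2) \<le> \<bar>\<Sum>c<d (Suc j). bn t (Suc j) c * V t (Suc (Suc j)) c\<bar>) at_top"
      using ev_t
    proof eventually_elim
      case (elim t)
      show ?case unfolding \<beta>_def \<alpha>_def
        by (rule geom[OF bn_nsq[OF elim jL] idx(2)[OF elim j1]]) (use idx(3)[OF elim j2] in simp)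
    qed
    show "eventually (\<lambda>t. \<bar>\<Sum>c<d (Suc j). bn t (Suc j) c * V t (Suc (Suc j)) c\<bar> \<le> 1) at_top"
      using ev_t
    proof eventually_elim
      case (elim t)
      show ?case
        by (rule unit_ip[OF bn_nsq[OF elim jL]]) (use idx(3)[OF elim j2] in simp)
    qed
  qed
qed

lemma part2_lim: "((\<lambda>t. \<bar>bn t L 0\<bar>) \<longlongrightarrow> 1) at_top"
proof -
  obtain L0 where L0: "L = Suc L0" using L_pos by (cases L) auto
  have "((\<lambda>t. \<bar>\<Sum>a<d (Suc L0). bn t (Suc L0) a * U t (Suc L0) a\<bar>) \<longlongrightarrow> 1) at_top"
    using beta_lim[of L0] chain_lim[of L0] L0 by simp
  moreover have "eventually (\<lambda>t. \<bar>\<Sum>a<d (Suc L0). bn t (Suc L0) a * U t (Suc L0) a\<bar> = \<bar>bn t L 0\<bar>) at_top"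
    using ev_t
  proof eventually_elim
    case (elim t)
    have jL: "L \<in> {1..L}" using L_pos by simp
    have "nsq (d L) (U t L) = 1" by (rule idx(2)[OF elim jL])
    hence "(U t L 0)^2 = 1" using d_L by (simp add: nsq_def)
    hence "\<bar>U t L 0\<bar> = 1" by (simp only: abs_square_eq_1)
    thus ?case using d_L L0 by (simp add: abs_mult)
  qed
  ultimately show ?thesis by (simp add: Lim_transform_eventually)
qed

lemma part2_eq:
  assumes t: "t \<ge> 0"
  shows "\<bar>(1 / (\<Prod>j\<in>{1..L}. frob_norm (W t j))) * (row (prod_layers d (W t) L) 0 \<bullet> v t 1)\<bar> = \<bar>bn t L 0\<bar>"
proof -
  have j1: "1 \<in> {1..L}" using L_pos by simp
  have vc: "v t 1 \<in> carrier_vec (d 0)" using idx(7)[OF t j1] by simp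
  have "row (prod_layers d (W t) L) 0 \<bullet> v t 1 = (prod_layers d (W t) L *\<^sub>v v t 1) $ 0"
    using prod_layers_carrier[OF wdt[OF t], of L] d_L by simp
  also have "\<dots> = pvec d (W t) (V t 1) L 0"
    using prod_layers_pvec[OF wdt[OF t] vc, of L] d_L unfolding V_def by simp
  finally have e1: "row (prod_layers d (W t) L) 0 \<bullet> v t 1 = pvec d (W t) (V t 1) L 0" .
  have e2: "(\<Prod>j\<in>{1..L}. frob_norm (W t j)) = (\<Prod>j\<in>{1..L}. Fr t j)"
    using frob_W[OF t] by (intro prod.cong) auto
  show ?thesis unfolding e1 e2 bn_eq by simp
qed

lemma main_result:
  "(\<forall>j\<in>{1..L}.
     ((\<lambda>t. frob_norm ((1 / frob_norm (W t j)) \<cdot>\<^sub>m W t j - outer_prod (u t j) (v t j))) \<longlongrightarrow> 0) at_top) \<and>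
   ((\<lambda>t. \<bar>(1 / (\<Prod>j\<in>{1..L}. frob_norm (W t j))) * (row (prod_layers d (W t) L) 0 \<bullet> v t 1)\<bar>) \<longlongrightarrow> 1) at_top"
proof
  show "\<forall>j\<in>{1..L}. ((\<lambda>t. frob_norm ((1 / frob_norm (W t j)) \<cdot>\<^sub>m W t j - outer_prod (u t j) (v t j))) \<longlongrightarrow> 0) at_top"
    using part1 by blast
  have "eventually (\<lambda>t. \<bar>bn t L 0\<bar> = \<bar>(1 / (\<Prod>j\<in>{1..L}. frob_norm (W t j))) * (row (prod_layers d (W t) L) 0 \<bullet> v t 1)\<bar>) at_top"
    using ev_t by eventually_elim (metis part2_eq)
  thus "((\<lambda>t. \<bar>(1 / (\<Prod>j\<in>{1..L}. frob_norm (W t j))) * (row (prod_layers d (W t) L) 0 \<bullet> v t 1)\<bar>) \<longlongrightarrow> 1) at_top"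
    using part2_lim by (rule Lim_transform_eventually[rotated])
qed

end


theorem theorem20:
  fixes L k :: nat
    and d :: "nat \<Rightarrow> nat"
    and n :: "nat \<Rightarrow> nat"
    and G :: "nat \<Rightarrow> nat \<Rightarrow> nat \<Rightarrow> bool"
    and X :: "nat \<Rightarrow> real mat"
    and y :: "nat \<Rightarrow> real"
    and loss loss' :: "real \<Rightarrow> real"
    and W :: "real \<Rightarrow> nat \<Rightarrow> real mat"
    and u v :: "real \<Rightarrow> nat \<Rightarrow> real vec"
  assumes L_pos: "L \<ge> 1"
    and dims_pos: "\<forall>j\<le>L. d j > 0"
    and d_L: "d L = 1"
    and graphs: "\<forall>i<k. simple_graph (n i) (G i)"
    and feats: "\<forall>i<k. X i \<in> carrier_mat (d 0) (n i)"
    and labels: "\<forall>i<k. y i \<in> {-1, 1}"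
    and separable: "\<exists>ub. ub \<in> carrier_vec (d 0) \<and>
                     (\<forall>i<k. y i * (ub \<bullet> agg_feat L (n i) (G i) (X i)) > 0)"
    and loss_pos: "\<forall>x. loss x > 0"
    and loss_deriv: "\<forall>x. (loss has_real_derivative loss' x) (at x)"
    and loss'_cont: "continuous_on UNIV loss'"
    and loss'_neg: "\<forall>x. loss' x < 0"
    and loss_bot: "filterlim loss at_top at_bot"
    and loss_top: "(loss \<longlongrightarrow> 0) at_top"
    and flow: "gradient_flow L d (risk loss L d k n G X y) W"
    and init: "risk loss L d k n G X y (W 0) < risk loss L d k n G X y (zero_weights d)"
    and sing: "\<forall>t\<ge>0. \<forall>j\<in>{1..L}. top_singular_vectors (W t j) (u t j) (v t j)"
  shows "(\<forall>j\<in>{1..L}.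
           ((\<lambda>t. frob_norm ((1 / frob_norm (W t j)) \<cdot>\<^sub>m W t j - outer_prod (u t j) (v t j)))
              \<longlongrightarrow> 0) at_top) \<and>
         ((\<lambda>t. \<bar>(1 / (\<Prod>j\<in>{1..L}. frob_norm (W t j))) *
                  (row (prod_layers d (W t) L) 0 \<bullet> v t 1)\<bar>) \<longlongrightarrow> 1) at_top"
proof -
  have "mp L k d n G X y loss loss' W u v"
    unfolding mp_def using L_pos dims_pos d_L feats labels separable loss_pos loss_deriv loss'_cont
      loss'_neg flow init sing by blast
  thus ?thesis by (rule mp.main_result)
qed

end
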